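(* Let $0<p<1$ and $u_0\equiv0$. Then problem (P) has a solution, defined on some interval $[0,t_0)$ with $t_0>0$, which is not identically zero. Hence (P) with $u_0\equiv0$ does not have uniqueness.
   Context: Standing assumptions: $\Omega\subset\mathbb{R}^N$ bounded, connected, smooth; $J\in C(\mathbb{R}^N)$, $J\ge0$ symmetric, $\int J=1$, $J>0$ on $B(0,d)$, $J=0$ outside $B(0,d)$. There is $s_0>d$ such that $y=z+s\eta(z)$, $z\in\partial\Omega$, $s\in(0,s_0)$ ($\eta$ exterior unit normal) give coordinates on a neighborhood of $\partial\Omega$ in $\mathbb{R}^N\setminus\Omega$; $\overline u(z+s\eta(z),t)=u(z,t)$. Problem (P): $u_t(x,t)=\int_\Omega J(x-y)(u(y,t)-u(x,t))dy+\int_{\mathbb{R}^N\setminus\Omega}J(x-y)\overline u^p(y,t)dy$ for $x\in\overline\Omega$, $u(x,0)=u_0(x)$; a solution on $[0,t_0)$ is a nonnegative continuous function on $\overline\Omega\times[0,t_0)$, differentiable in $t$, satisfying (P). *)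

theory Defs
  imports "HOL-Analysis.Analysis"
begin

definition kernel_ok :: "('a::euclidean_space \<Rightarrow> real) \<Rightarrow> real \<Rightarrow> bool" where
  "kernel_ok J d \<longleftrightarrow> d > 0 \<and> continuous_on UNIV J \<and> (\<forall>x. J x \<ge> 0) \<and> (\<forall>x. J (- x) = J x)
     \<and> (J has_integral 1) UNIV \<and> (\<forall>x. norm x < d \<longrightarrow> J x > 0) \<and> (\<forall>x. norm x \<ge> d \<longrightarrow> J x = 0)"

definition domain_ok :: "'a::euclidean_space set \<Rightarrow> ('a \<Rightarrow> 'a) \<Rightarrow> real \<Rightarrow> real \<Rightarrow> bool" where
  "domain_ok \<Omega> \<eta> s0 d \<longleftrightarrow> open \<Omega> \<and> bounded \<Omega> \<and> connected \<Omega> \<and> \<Omega> \<noteq> {} \<and> s0 > d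
     \<and> continuous_on (frontier \<Omega>) \<eta> \<and> (\<forall>z\<in>frontier \<Omega>. norm (\<eta> z) = 1)
     \<and> bij_betw (\<lambda>(z, s). z + s *\<^sub>R \<eta> z) (frontier \<Omega> \<times> {0<..<s0})
         {y. y \<notin> closure \<Omega> \<and> infdist y \<Omega> < s0}"

text \<open>The extension \<open>\<overline>u(z + s \<eta>(z), t) = u(z, t)\<close>; on the boundary itself (s = 0) it is u;
  elsewhere (never reached by the kernel) it is set to 0.\<close>
definition ext_u :: "'a::euclidean_space set \<Rightarrow> ('a \<Rightarrow> 'a) \<Rightarrow> real \<Rightarrow> ('a \<Rightarrow> real \<Rightarrow> real) \<Rightarrow> 'a \<Rightarrow> real \<Rightarrow> real" where
  "ext_u \<Omega> \<eta> s0 u y t =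
     (if y \<in> frontier \<Omega> then u y t
      else if (\<exists>z s. z \<in> frontier \<Omega> \<and> 0 < s \<and> s < s0 \<and> y = z + s *\<^sub>R \<eta> z)
      then u (THE z. \<exists>s. z \<in> frontier \<Omega> \<and> 0 < s \<and> s < s0 \<and> y = z + s *\<^sub>R \<eta> z) t
      else 0)"

definition is_solution_P ::
  "'a::euclidean_space set \<Rightarrow> ('a \<Rightarrow> real) \<Rightarrow> ('a \<Rightarrow> 'a) \<Rightarrow> real \<Rightarrow> real \<Rightarrow> ('a \<Rightarrow> real)
    \<Rightarrow> real \<Rightarrow> ('a \<Rightarrow> real \<Rightarrow> real) \<Rightarrow> bool" where
  "is_solution_P \<Omega> J \<eta> s0 p u0 t0 u \<longleftrightarrow>
     (\<forall>x\<in>closure \<Omega>. \<forall>t\<in>{0..<t0}. u x t \<ge> 0)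
     \<and> continuous_on (closure \<Omega> \<times> {0..<t0}) (\<lambda>(x, t). u x t)
     \<and> (\<forall>x\<in>closure \<Omega>. u x 0 = u0 x)
     \<and> (\<forall>x\<in>closure \<Omega>. \<forall>t\<in>{0..<t0}.
          (u x has_real_derivative
             (integral \<Omega> (\<lambda>y. J (x - y) * (u y t - u x t))
              + integral (- \<Omega>) (\<lambda>y. J (x - y) * (ext_u \<Omega> \<eta> s0 u y t) powr p)))
          (at t within {0..<t0}))"

end

theory Submission
  imports Defs
begin


locale P53 =
  fixes \<Omega> :: "'a::euclidean_space set" and J :: "'a \<Rightarrow> real" and \<eta> :: "'a \<Rightarrow> 'a"
    and d s0 p :: real
  assumes kok: "kernel_ok J d" and dok: "domain_ok \<Omega> \<eta> s0 d" and p0: "0 < p" and p1: "p < 1"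
begin

lemma d_pos: "d > 0" and J_cont: "continuous_on UNIV J" and J_nonneg: "\<And>x. J x \<ge> 0"
  and J_pos: "\<And>x. norm x < d \<Longrightarrow> J x > 0" and J_zero: "\<And>x. norm x \<ge> d \<Longrightarrow> J x = 0"
  using kok unfolding kernel_ok_def by auto

lemma om_open: "open \<Omega>" and om_bdd: "bounded \<Omega>" and om_ne: "\<Omega> \<noteq> {}" and ds0: "d < s0"
  and eta_cont: "continuous_on (frontier \<Omega>) \<eta>" and eta_norm: "\<And>z. z \<in> frontier \<Omega> \<Longrightarrow> norm (\<eta> z) = 1"
  and bij: "bij_betw (\<lambda>(z, s). z + s *\<^sub>R \<eta> z) (frontier \<Omega> \<times> {0<..<s0})
         {y. y \<notin> closure \<Omega> \<and> infdist y \<Omega> < s0}"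
  using dok unfolding domain_ok_def by auto

definition "Cl = {y. y \<notin> closure \<Omega> \<and> infdist y \<Omega> < s0}"
definition "Dm = frontier \<Omega> \<times> {0<..<s0}"
definition "phi = (\<lambda>(z::'a, s::real). z + s *\<^sub>R \<eta> z)"
definition "prj y = (THE z. \<exists>s. z \<in> frontier \<Omega> \<and> 0 < s \<and> s < s0 \<and> y = z + s *\<^sub>R \<eta> z)"

lemma bij': "bij_betw phi Dm Cl" using bij unfolding phi_def Dm_def Cl_def .

lemma Fr_K: "frontier \<Omega> \<subseteq> closure \<Omega>"
  by (simp add: frontier_def)

lemma Fr_Om: "frontier \<Omega> \<inter> \<Omega> = {}"
  using om_open by (auto simp: frontier_def interior_open)

lemma K_compact: "compact (closure \<Omega>)" using om_bdd by (simp add: compact_closure)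
lemma Fr_compact: "compact (frontier \<Omega>)" using om_bdd by (simp add: compact_frontier_bounded)

lemma Cl_open: "open Cl"
proof -
  have "Cl = (- closure \<Omega>) \<inter> {y. infdist y \<Omega> < s0}" by (auto simp: Cl_def)
  moreover have "open {y. infdist y \<Omega> < s0}"
    by (rule open_Collect_less) (auto intro: continuous_on_infdist[OF continuous_on_id])
  ultimately show ?thesis by auto
qed

lemma Cl_disj: "y \<in> Cl \<Longrightarrow> y \<notin> closure \<Omega>" by (simp add: Cl_def)

lemma ex_iff_Cl: "(\<exists>z s. z \<in> frontier \<Omega> \<and> 0 < s \<and> s < s0 \<and> y = z + s *\<^sub>R \<eta> z) \<longleftrightarrow> y \<in> Cl"
proof -
  have e: "phi ` Dm = Cl" using bij' by (simp add: bij_betw_def)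
  show ?thesis
  proof
    assume "\<exists>z s. z \<in> frontier \<Omega> \<and> 0 < s \<and> s < s0 \<and> y = z + s *\<^sub>R \<eta> z"
    then obtain z s where h: "z \<in> frontier \<Omega>" "0 < s" "s < s0" "y = z + s *\<^sub>R \<eta> z" by blast
    then have "(z, s) \<in> Dm" by (simp add: Dm_def)
    then have "phi (z, s) \<in> Cl" using e by blast
    then show "y \<in> Cl" using h by (simp add: phi_def)
  next
    assume "y \<in> Cl"
    then obtain q where q: "q \<in> Dm" "y = phi q" using e by blast
    obtain z s where "q = (z, s)" by (cases q)
    then show "\<exists>z s. z \<in> frontier \<Omega> \<and> 0 < s \<and> s < s0 \<and> y = z + s *\<^sub>R \<eta> z"
      using q by (auto simp: Dm_def phi_def)
  qed
qed

lemma prj_phi: assumes "z \<in> frontier \<Omega>" "0 < s" "s < s0" shows "prj (z + s *\<^sub>R \<eta> z) = z"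
  unfolding prj_def
proof (rule the_equality)
  show "\<exists>s'. z \<in> frontier \<Omega> \<and> 0 < s' \<and> s' < s0 \<and> z + s *\<^sub>R \<eta> z = z + s' *\<^sub>R \<eta> z"
    using assms by blast
next
  fix z' assume "\<exists>s'. z' \<in> frontier \<Omega> \<and> 0 < s' \<and> s' < s0 \<and> z + s *\<^sub>R \<eta> z = z' + s' *\<^sub>R \<eta> z'"
  then obtain s' where h: "z' \<in> frontier \<Omega>" "0 < s'" "s' < s0" "z + s *\<^sub>R \<eta> z = z' + s' *\<^sub>R \<eta> z'" by auto
  have "inj_on phi Dm" using bij' by (simp add: bij_betw_def)
  moreover have "phi (z, s) = phi (z', s')" using h by (simp add: phi_def)
  moreover have "(z, s) \<in> Dm" "(z', s') \<in> Dm" using h assms by (auto simp: Dm_def)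
  ultimately have "(z, s) = (z', s')" by (meson inj_onD)
  then show "z' = z" by simp
qed

lemma prj_Fr: assumes "y \<in> Cl" shows "prj y \<in> frontier \<Omega>"
proof -
  obtain z s where "z \<in> frontier \<Omega>" "0 < s" "s < s0" "y = z + s *\<^sub>R \<eta> z"
    using assms ex_iff_Cl by blast
  then show ?thesis using prj_phi by auto
qed

lemma ext_eq: "ext_u \<Omega> \<eta> s0 u y t = (if y \<in> frontier \<Omega> then u y t else if y \<in> Cl then u (prj y) t else 0)"
  unfolding ext_u_def ex_iff_Cl prj_def by simp

lemma ext_cases: "(\<exists>z\<in>frontier \<Omega>. \<forall>u t. ext_u \<Omega> \<eta> s0 u y t = u z t) \<or> (\<forall>u t. ext_u \<Omega> \<eta> s0 u y t = 0)"
proof (cases "y \<in> frontier \<Omega>")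
  case True then show ?thesis by (auto simp: ext_eq)
next
  case False
  show ?thesis
  proof (cases "y \<in> Cl")
    case True
    then show ?thesis using False prj_Fr[OF True] by (auto simp: ext_eq)
  qed (use False in \<open>auto simp: ext_eq\<close>)
qed

lemma ext_near: assumes "x \<in> closure \<Omega>" "y \<notin> \<Omega>" "J (x - y) \<noteq> 0"
  shows "\<exists>z\<in>frontier \<Omega>. \<forall>u t. ext_u \<Omega> \<eta> s0 u y t = u z t"
proof (cases "y \<in> frontier \<Omega>")
  case True then show ?thesis by (auto simp: ext_eq)
next
  case False
  have nd: "norm (x - y) < d" using assms(3) J_zero by force
  have "y \<notin> closure \<Omega>" using False assms(2) by (simp add: closure_Un_frontier)
  moreover have "infdist y \<Omega> < s0"
  proof -
    have "dist y x < d" using nd by (simp add: dist_norm norm_minus_commute)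
    then obtain x' where x': "x' \<in> \<Omega>" "dist x' x < d - dist y x"
      using assms(1) by (meson closure_approachable diff_gt_0_iff_gt)
    have "infdist y \<Omega> \<le> dist y x'" using x'(1) by (rule infdist_le)
    also have "\<dots> \<le> dist y x + dist x' x" by (simp add: dist_triangle2)
    also have "\<dots> < s0" using x'(2) ds0 by linarith
    finally show ?thesis .
  qed
  ultimately have "y \<in> Cl" by (simp add: Cl_def)
  then show ?thesis using False prj_Fr by (auto simp: ext_eq)
qed

end



context P53 begin

lemma J_bdd_ex: "\<exists>M>0. \<forall>a. J a \<le> M"
proof -
  have "compact (J ` cball 0 d)"
    by (rule compact_continuous_image) (auto intro: continuous_on_subset[OF J_cont])
  then obtain M where M: "\<forall>v\<in>J ` cball 0 d. norm v \<le> M"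
    using compact_imp_bounded bounded_iff by metis
  have "\<forall>a. J a \<le> max M 1"
  proof
    fix a show "J a \<le> max M 1"
    proof (cases "norm a \<ge> d")
      case True then show ?thesis using J_zero by simp
    next
      case False then have "a \<in> cball 0 d" by simp
      then have "norm (J a) \<le> M" using M by blast
      then show ?thesis by simp
    qed
  qed
  then show ?thesis by (intro exI[of _ "max M 1"]) auto
qed

definition "Jm = (SOME M. M > 0 \<and> (\<forall>a. J a \<le> M))"

lemma Jm: "Jm > 0" "\<And>a. J a \<le> Jm"
  using someI_ex[OF J_bdd_ex] unfolding Jm_def by auto

lemma bx_ex: "\<exists>a. \<forall>x\<in>closure \<Omega>. \<forall>y. J (x - y) \<noteq> 0 \<longrightarrow> y \<in> cbox (-a) a"
proof -
  obtain R where R: "\<forall>x\<in>closure \<Omega>. norm x \<le> R"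
    using om_bdd bounded_closure bounded_iff by metis
  obtain a where a: "cball (0::'a) (R + d) \<subseteq> cbox (-a) a"
    using bounded_subset_cbox_symmetric[OF bounded_cball] by blast
  have "y \<in> cbox (-a) a" if "x \<in> closure \<Omega>" "J (x - y) \<noteq> 0" for x y
  proof -
    have "norm (x - y) < d" using that J_zero by force
    moreover have "norm x \<le> R" using R that by auto
    moreover have "norm y \<le> norm x + norm (x - y)"
      using norm_triangle_ineq4[of x "x - y"] by simp
    ultimately have "norm y \<le> R + d" by linarith
    then show ?thesis using a by auto
  qed
  then show ?thesis by blast
qed

definition "bx = (SOME a. \<forall>x\<in>closure \<Omega>. \<forall>y. J (x - y) \<noteq> 0 \<longrightarrow> y \<in> cbox (-a) a)"

lemma bx: "x \<in> closure \<Omega> \<Longrightarrow> J (x - y) \<noteq> 0 \<Longrightarrow> y \<in> cbox (-bx) bx"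
  using someI_ex[OF bx_ex] unfolding bx_def by blast

lemma bx': "x \<in> closure \<Omega> \<Longrightarrow> y \<notin> cbox (-bx) bx \<Longrightarrow> J (x - y) = 0"
  using bx by blast

definition "L = Jm * measure lborel (cbox (-bx) bx) + 1"

lemma L_ge1: "L \<ge> 1" using Jm by (simp add: L_def)

lemma box_int: "(\<lambda>y. if y \<in> cbox (-bx) bx then (c::real) else 0) integrable_on UNIV"
  using Henstock_Kurzweil_Integration.integrable_restrict_UNIV[of "cbox (-bx) bx" "\<lambda>_. c"]
    Henstock_Kurzweil_Integration.integrable_const[of c "-bx" bx] by simp

lemma box_integral: "integral UNIV (\<lambda>y. if y \<in> cbox (-bx) bx then c else (0::real)) = measure lborel (cbox (-bx) bx) * c"
  using Henstock_Kurzweil_Integration.integral_restrict_UNIV[of "cbox (-bx) bx" "\<lambda>_. c"]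
    Henstock_Kurzweil_Integration.integral_const[of "-bx" bx c] by simp

lemma intg:
  fixes f :: "'a \<Rightarrow> real" and S :: "'a set"
  assumes S: "S \<in> sets lebesgue" and f: "f \<in> borel_measurable (lebesgue_on S)"
    and b: "\<And>y. y \<in> S \<Longrightarrow> \<bar>f y\<bar> \<le> M" and M: "M \<ge> 0" and z: "\<And>y. y \<in> S \<Longrightarrow> y \<notin> cbox (-bx) bx \<Longrightarrow> f y = 0"
  shows "f integrable_on S"
proof -
  let ?g = "\<lambda>y. if y \<in> S then f y else 0"
  have "?g \<in> borel_measurable lebesgue" by (rule borel_measurable_if_I[OF f S])
  then have m: "?g \<in> borel_measurable (lebesgue_on UNIV)" unfolding lebesgue_on_UNIV_eq .
  have bd: "\<bar>?g y\<bar> \<le> (if y \<in> cbox (-bx) bx then M else 0)" for y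
  proof (cases "y \<in> S")
    case True then show ?thesis using b[OF True] z[OF True] by (cases "y \<in> cbox (-bx) bx") auto
  next
    case False
    then show ?thesis using M by simp
  qed
  have "?g integrable_on UNIV"
    by (rule measurable_bounded_by_integrable_imp_integrable_real[OF m box_int[of M]]) (use bd in auto)
  then show ?thesis by (simp only: Henstock_Kurzweil_Integration.integrable_restrict_UNIV)
qed

lemma IB:
  fixes g :: "'a \<Rightarrow> real"
  assumes x: "x \<in> closure \<Omega>" and i: "(\<lambda>y. J (x - y) * g y) integrable_on S"
    and g: "\<And>y. y \<in> S \<Longrightarrow> \<bar>g y\<bar> \<le> 1"
  shows "\<bar>integral S (\<lambda>y. J (x - y) * g y)\<bar> \<le> L - 1"
proof -
  let ?f = "\<lambda>y. if y \<in> S then J (x - y) * g y else 0"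
  have "integral S (\<lambda>y. J (x - y) * g y) = integral UNIV ?f"
    by (simp add: Henstock_Kurzweil_Integration.integral_restrict_UNIV)
  moreover have "norm (integral UNIV ?f) \<le> integral UNIV (\<lambda>y. if y \<in> cbox (-bx) bx then Jm else 0)"
  proof (rule integral_norm_bound_integral)
    show "?f integrable_on UNIV" using i by (simp add: Henstock_Kurzweil_Integration.integrable_restrict_UNIV)
    show "(\<lambda>y. if y \<in> cbox (-bx) bx then Jm else 0) integrable_on UNIV" by (rule box_int)
    fix y
    show "norm (?f y) \<le> (if y \<in> cbox (-bx) bx then Jm else 0)"
    proof (cases "y \<in> S")
      case True
      have "J (x - y) * \<bar>g y\<bar> \<le> Jm * 1"
        by (rule mult_mono) (use Jm J_nonneg g[OF True] in auto)
      then have "\<bar>J (x - y) * g y\<bar> \<le> Jm * 1" by (simp add: abs_mult J_nonneg)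
      then show ?thesis using True bx'[OF x, of y] by auto
    qed (use Jm in auto)
  qed
  ultimately show ?thesis by (simp add: box_integral L_def mult.commute)
qed

lemma J_uc: assumes "e > 0" shows "\<exists>\<delta>>0. \<forall>a a'. dist a a' < \<delta> \<longrightarrow> \<bar>J a - J a'\<bar> < e"
proof -
  have "uniformly_continuous_on (cball 0 (d + 1)) J"
    by (rule compact_uniformly_continuous) (auto intro: continuous_on_subset[OF J_cont])
  then obtain \<delta> where \<delta>: "\<delta> > 0" "\<forall>a\<in>cball 0 (d+1). \<forall>a'\<in>cball 0 (d+1). dist a' a < \<delta> \<longrightarrow> dist (J a') (J a) < e"
    using assms unfolding uniformly_continuous_on_def by metis
  show ?thesis
  proof (intro exI[of _ "min \<delta> 1"] conjI allI impI)
    show "min \<delta> 1 > 0" using \<delta> by simp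
    fix a a' :: 'a assume h: "dist a a' < min \<delta> 1"
    have na: "\<bar>norm a - norm a'\<bar> < 1" using h
      by (smt (verit, ccfv_SIG) dist_norm norm_triangle_ineq3)
    show "\<bar>J a - J a'\<bar> < e"
    proof (cases "norm a \<le> d + 1 \<and> norm a' \<le> d + 1")
      case True
      then show ?thesis using \<delta>(2) h by (auto simp: dist_real_def dist_commute)
    next
      case False
      then have "norm a \<ge> d \<and> norm a' \<ge> d" using na by auto
      then show ?thesis using J_zero assms by simp
    qed
  qed
qed

lemma KL:
  assumes "e > 0"
  shows "\<exists>\<delta>>0. \<forall>x\<in>closure \<Omega>. \<forall>x'\<in>closure \<Omega>. dist x x' < \<delta> \<longrightarrow>
     (\<forall>S g. (\<lambda>y. J (x - y) * g y) integrable_on S \<longrightarrow> (\<lambda>y. J (x' - y) * g y) integrable_on S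
        \<longrightarrow> (\<forall>y\<in>S. \<bar>g y\<bar> \<le> 1)
        \<longrightarrow> \<bar>integral S (\<lambda>y. J (x - y) * g y) - integral S (\<lambda>y. J (x' - y) * g y)\<bar> \<le> e)"
proof -
  define c where "c = max (measure lborel (cbox (-bx) bx)) 0 + 1"
  have c0: "max (measure lborel (cbox (-bx) bx)) 0 \<ge> 0" "measure lborel (cbox (-bx) bx) \<le> max (measure lborel (cbox (-bx) bx)) 0"
    by (rule max.cobounded2, rule max.cobounded1)
  have c: "c > 0" "measure lborel (cbox (-bx) bx) \<le> c"
    using c0 unfolding c_def by linarith+
  obtain \<delta> where \<delta>: "\<delta> > 0" "\<forall>a a'. dist a a' < \<delta> \<longrightarrow> \<bar>J a - J a'\<bar> < e / c"
    using J_uc[of "e / c"] assms c by auto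
  show ?thesis
  proof (intro exI[of _ \<delta>] conjI ballI impI allI)
    show "\<delta> > 0" by fact
    fix x x' S and g :: "'a \<Rightarrow> real"
    assume x: "x \<in> closure \<Omega>" and x': "x' \<in> closure \<Omega>" and dx: "dist x x' < \<delta>"
      and i1: "(\<lambda>y. J (x - y) * g y) integrable_on S" and i2: "(\<lambda>y. J (x' - y) * g y) integrable_on S"
      and g: "\<forall>y\<in>S. \<bar>g y\<bar> \<le> 1"
    let ?f = "\<lambda>y. if y \<in> S then J (x - y) * g y - J (x' - y) * g y else 0"
    have "integral S (\<lambda>y. J (x - y) * g y) - integral S (\<lambda>y. J (x' - y) * g y)
        = integral S (\<lambda>y. J (x - y) * g y - J (x' - y) * g y)"
      using i1 i2 by (simp add: integral_diff)
    also have "\<dots> = integral UNIV ?f"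
      by (simp add: Henstock_Kurzweil_Integration.integral_restrict_UNIV)
    finally have eq: "integral S (\<lambda>y. J (x - y) * g y) - integral S (\<lambda>y. J (x' - y) * g y) = integral UNIV ?f" .
    have "norm (integral UNIV ?f) \<le> integral UNIV (\<lambda>y. if y \<in> cbox (-bx) bx then e / c else 0)"
    proof (rule integral_norm_bound_integral)
      show "?f integrable_on UNIV" using integrable_diff[OF i1 i2]
        by (simp add: Henstock_Kurzweil_Integration.integrable_restrict_UNIV)
      show "(\<lambda>y. if y \<in> cbox (-bx) bx then e / c else 0) integrable_on UNIV" by (rule box_int)
      fix y
      have dd: "dist (x - y) (x' - y) < \<delta>" using dx by (simp add: dist_norm)
      show "norm (?f y) \<le> (if y \<in> cbox (-bx) bx then e / c else 0)"
      proof (cases "y \<in> S")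
        case True
        have "\<bar>J (x - y) * g y - J (x' - y) * g y\<bar> = \<bar>J (x - y) - J (x' - y)\<bar> * \<bar>g y\<bar>"
          by (metis abs_mult left_diff_distrib)
        also have "\<dots> \<le> e / c * 1"
        proof (rule mult_mono)
          show "\<bar>J (x - y) - J (x' - y)\<bar> \<le> e / c" using \<delta>(2) dd by (meson less_imp_le)
          show "0 \<le> e / c" using c assms by simp
        qed (use g True in auto)
        finally have "\<bar>J (x - y) * g y - J (x' - y) * g y\<bar> \<le> e / c" by simp
        then show ?thesis using True bx'[OF x, of y] bx'[OF x', of y] by auto
      qed (use assms c in auto)
    qed
    also have "\<dots> = measure lborel (cbox (-bx) bx) * (e / c)" by (rule box_integral)
    also have "\<dots> \<le> c * (e / c)" using c assms by (intro mult_right_mono) auto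
    also have "\<dots> = e" using c by simp
    finally show "\<bar>integral S (\<lambda>y. J (x - y) * g y) - integral S (\<lambda>y. J (x' - y) * g y)\<bar> \<le> e"
      using eq by simp
  qed
qed

end



lemma borel_to_leb:
  fixes f :: "'a::euclidean_space \<Rightarrow> real"
  assumes "f \<in> borel_measurable borel"
  shows "f \<in> borel_measurable (lebesgue_on S)"
proof -
  have "f \<in> borel_measurable lborel" using assms by simp
  then have "f \<in> borel_measurable lebesgue" by (rule measurable_completion)
  then show ?thesis by (rule measurable_restrict_space1)
qed

context P53 begin

lemma s0_pos: "s0 > 0" using d_pos ds0 by simp

lemma phi_cont: "continuous_on (frontier \<Omega> \<times> I) phi"
proof -
  have "continuous_on (frontier \<Omega> \<times> I) (\<lambda>q. \<eta> (fst q))"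
    by (rule continuous_on_compose2[OF eta_cont continuous_on_fst]) auto
  then have "continuous_on (frontier \<Omega> \<times> I) (\<lambda>q. fst q + snd q *\<^sub>R \<eta> (fst q))"
    by (intro continuous_intros)
  moreover have "phi = (\<lambda>q. fst q + snd q *\<^sub>R \<eta> (fst q))" by (auto simp: phi_def)
  ultimately show ?thesis by simp
qed

definition "Kn n = phi ` (frontier \<Omega> \<times> {s0 / (real n + 3) .. s0 - s0 / (real n + 3)})"

lemma In_sub: "{s0 / (real n + 3) .. s0 - s0 / (real n + 3)} \<subseteq> {0<..<s0}"
proof -
  have a: "s0 / (real n + 3) > 0" using s0_pos by simp
  have "s0 / (real n + 3) < s0" using s0_pos by (simp add: divide_less_eq)
  then show ?thesis using a by auto
qed

lemma Kn_sub: "Kn n \<subseteq> Cl"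
proof -
  have "phi ` Dm = Cl" using bij' by (simp add: bij_betw_def)
  moreover have "frontier \<Omega> \<times> {s0 / (real n + 3) .. s0 - s0 / (real n + 3)} \<subseteq> Dm"
    using In_sub by (auto simp: Dm_def)
  ultimately show ?thesis unfolding Kn_def by blast
qed

lemma Kn_compact: "compact (Kn n)"
  unfolding Kn_def
  by (rule compact_continuous_image[OF phi_cont]) (simp add: compact_Times Fr_compact)

lemma prj_cont_Kn: "continuous_on (Kn n) prj"
proof -
  let ?S = "frontier \<Omega> \<times> {s0 / (real n + 3) .. s0 - s0 / (real n + 3)}"
  let ?g = "the_inv_into Dm phi"
  have inj: "inj_on phi Dm" using bij' by (simp add: bij_betw_def)
  have SD: "?S \<subseteq> Dm" using In_sub by (auto simp: Dm_def)
  have "continuous_on (phi ` ?S) ?g"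
  proof (rule continuous_on_inv[OF phi_cont])
    show "compact ?S" by (simp add: compact_Times Fr_compact)
    show "\<forall>x\<in>?S. ?g (phi x) = x"
    proof
      fix x assume "x \<in> ?S" then have "x \<in> Dm" using SD by blast
      then show "?g (phi x) = x" by (rule the_inv_into_f_f[OF inj])
    qed
  qed
  then have c: "continuous_on (Kn n) (\<lambda>y. fst (?g y))" unfolding Kn_def
    by (rule continuous_on_fst)
  have "prj y = fst (?g y)" if yK: "y \<in> Kn n" for y
  proof -
    obtain q where q: "q \<in> ?S" "y = phi q" using yK unfolding Kn_def by blast
    obtain z s where "q = (z, s)" by (cases q)
    then have zs: "(z, s) \<in> ?S" "y = phi (z, s)" using q by auto
    then have "(z, s) \<in> Dm" using SD by blast
    then have "?g y = (z, s)" using zs(2) the_inv_into_f_f[OF inj] by blast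
    moreover have "prj y = z"
    proof -
      have "z \<in> frontier \<Omega>" "0 < s" "s < s0" using \<open>(z, s) \<in> Dm\<close> by (auto simp: Dm_def)
      then have "prj (z + s *\<^sub>R \<eta> z) = z" by (rule prj_phi)
      then show ?thesis using zs(2) by (simp add: phi_def)
    qed
    ultimately show ?thesis by simp
  qed
  then show ?thesis by (intro continuous_on_eq[OF c]) simp
qed

lemma prj_Kn_Fr: "y \<in> Kn n \<Longrightarrow> prj y \<in> frontier \<Omega>"
  using Kn_sub prj_Fr by blast

lemma Cl_eventually_Kn: assumes "y \<in> Cl" shows "\<exists>N. \<forall>n\<ge>N. y \<in> Kn n"
proof -
  obtain z s where zs: "z \<in> frontier \<Omega>" "0 < s" "s < s0" "y = z + s *\<^sub>R \<eta> z"
    using assms ex_iff_Cl by blast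
  define m where "m = min s (s0 - s)"
  have m: "m > 0" using zs by (simp add: m_def)
  obtain N :: nat where N: "s0 / m < real N" using reals_Archimedean2 by blast
  have "y \<in> Kn n" if "n \<ge> N" for n
  proof -
    have "s0 / m < real n + 3" using N that by linarith
    then have "s0 < (real n + 3) * m" using m by (simp add: divide_less_eq mult.commute)
    then have "s0 / (real n + 3) < m" by (simp add: divide_less_eq mult.commute)
    then have "s \<in> {s0 / (real n + 3) .. s0 - s0 / (real n + 3)}" unfolding m_def by auto
    then have "(z, s) \<in> frontier \<Omega> \<times> {s0 / (real n + 3) .. s0 - s0 / (real n + 3)}" using zs by simp
    moreover have "y = phi (z, s)" using zs by (simp add: phi_def)
    ultimately show ?thesis unfolding Kn_def by (rule rev_image_eqI)
  qed
  then show ?thesis by blast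
qed

lemma measE:
  fixes f :: "'a \<Rightarrow> real"
  assumes f: "continuous_on (frontier \<Omega>) f"
  shows "(\<lambda>y. if y \<in> frontier \<Omega> then f y else if y \<in> Cl then f (prj y) else 0) \<in> borel_measurable borel"
proof -
  have p1: "(\<lambda>y. if y \<in> frontier \<Omega> then f y else 0) \<in> borel_measurable borel"
    by (rule borel_measurable_continuous_on_if) (auto simp: f)
  let ?g = "\<lambda>n y. indicator (Kn n) y *\<^sub>R f (prj y)"
  have gm: "?g n \<in> borel_measurable borel" for n
  proof (rule borel_measurable_continuous_on_indicator)
    show "Kn n \<in> sets borel" using Kn_compact by (simp add: compact_imp_closed)
    show "continuous_on (Kn n) (\<lambda>y. f (prj y))"
      by (rule continuous_on_compose2[OF f prj_cont_Kn]) (auto simp: prj_Kn_Fr)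
  qed
  have lim: "(\<lambda>n. ?g n y) \<longlonglongrightarrow> (if y \<in> Cl then f (prj y) else 0)" for y
  proof (cases "y \<in> Cl")
    case True
    then obtain N where N: "\<forall>n\<ge>N. y \<in> Kn n" using Cl_eventually_Kn by blast
    have "eventually (\<lambda>n. ?g n y = f (prj y)) sequentially"
      unfolding eventually_sequentially using N by (intro exI[of _ N]) (simp add: indicator_def)
    then show ?thesis using True by (simp add: tendsto_eventually)
  next
    case False
    then have "\<forall>n. y \<notin> Kn n" using Kn_sub by blast
    then show ?thesis using False by simp
  qed
  have p2: "(\<lambda>y. if y \<in> Cl then f (prj y) else 0) \<in> borel_measurable borel"
    by (rule borel_measurable_LIMSEQ_real[OF _ gm]) (rule lim)
  have eq: "(\<lambda>y. if y \<in> frontier \<Omega> then f y else if y \<in> Cl then f (prj y) else 0)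
     = (\<lambda>y. (if y \<in> frontier \<Omega> then f y else 0) + (if y \<in> Cl then f (prj y) else 0))"
  proof (rule ext)
    fix y show "(if y \<in> frontier \<Omega> then f y else if y \<in> Cl then f (prj y) else 0)
     = (if y \<in> frontier \<Omega> then f y else 0) + (if y \<in> Cl then f (prj y) else 0)"
      using Cl_disj[of y] Fr_K by auto
  qed
  show ?thesis unfolding eq using p1 p2 by simp
qed

end


context P53 begin
lemma Om_leb: "\<Omega> \<in> sets lebesgue"
  using om_open by (metis borel_open sets_completionI_sets sets_lborel)
lemma cOm_leb: "- \<Omega> \<in> sets lebesgue"
  using Om_leb Compl_in_sets_lebesgue by blast

lemma Om_K: "\<Omega> \<subseteq> closure \<Omega>" by (rule closure_subset)

lemma Jx_cont: "continuous_on S (\<lambda>y. J (x - y))"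
  by (rule continuous_on_compose2[OF J_cont]) (auto intro: continuous_intros)

lemma Jx_borel: "(\<lambda>y. J (x - y)) \<in> borel_measurable borel"
  by (rule borel_measurable_continuous_onI[OF Jx_cont])

lemma int_J: assumes "S \<in> sets lebesgue" "x \<in> closure \<Omega>" shows "(\<lambda>y. J (x - y)) integrable_on S"
proof (rule intg[OF assms(1)])
  show "(\<lambda>y. J (x - y)) \<in> borel_measurable (lebesgue_on S)" by (rule borel_to_leb[OF Jx_borel])
  show "\<bar>J (x - y)\<bar> \<le> Jm" for y using Jm J_nonneg[of "x - y"] by simp
  show "J (x - y) = 0" if "y \<notin> cbox (-bx) bx" for y using bx'[OF assms(2) that] .
qed (use Jm in auto)

lemma int_Om:
  fixes g :: "'a \<Rightarrow> real"
  assumes x: "x \<in> closure \<Omega>" and g: "continuous_on \<Omega> g" and b: "\<And>y. y \<in> \<Omega> \<Longrightarrow> \<bar>g y\<bar> \<le> 1"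
  shows "(\<lambda>y. J (x - y) * g y) integrable_on \<Omega>"
proof (rule intg[OF Om_leb])
  have "continuous_on \<Omega> (\<lambda>y. J (x - y) * g y)" by (intro continuous_on_mult Jx_cont g)
  then show "(\<lambda>y. J (x - y) * g y) \<in> borel_measurable (lebesgue_on \<Omega>)"
    by (rule continuous_imp_measurable_on_sets_lebesgue[OF _ Om_leb])
  show "\<bar>J (x - y) * g y\<bar> \<le> Jm" if "y \<in> \<Omega>" for y
  proof -
    have "J (x - y) * \<bar>g y\<bar> \<le> Jm * 1" by (rule mult_mono) (use Jm J_nonneg b[OF that] in auto)
    then show ?thesis by (simp add: abs_mult J_nonneg)
  qed
  show "J (x - y) * g y = 0" if "y \<notin> cbox (-bx) bx" for y using bx'[OF x that] by simp
qed (use Jm in auto)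

lemma ext_bnd:
  assumes "\<And>z. z \<in> frontier \<Omega> \<Longrightarrow> 0 \<le> u z s \<and> u z s \<le> 1"
  shows "0 \<le> ext_u \<Omega> \<eta> s0 u y s \<and> ext_u \<Omega> \<eta> s0 u y s \<le> 1"
  using ext_cases[of y] assms by auto

lemma powr_01: "0 \<le> (a::real) \<Longrightarrow> a \<le> 1 \<Longrightarrow> 0 \<le> a powr p \<and> a powr p \<le> 1"
  using p0 by (auto intro: powr_le1)

lemma ext_pow_bnd:
  assumes "\<And>z. z \<in> frontier \<Omega> \<Longrightarrow> 0 \<le> u z s \<and> u z s \<le> 1"
  shows "0 \<le> ext_u \<Omega> \<eta> s0 u y s powr p \<and> ext_u \<Omega> \<eta> s0 u y s powr p \<le> 1"
  using ext_bnd[where u=u and s=s, OF assms] powr_01 by blast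

lemma int_cOm:
  assumes x: "x \<in> closure \<Omega>" and c: "continuous_on (frontier \<Omega>) (\<lambda>z. u z s)"
    and b: "\<And>z. z \<in> frontier \<Omega> \<Longrightarrow> 0 \<le> u z s \<and> u z s \<le> 1"
  shows "(\<lambda>y. J (x - y) * ext_u \<Omega> \<eta> s0 u y s powr p) integrable_on (- \<Omega>)"
proof (rule intg[OF cOm_leb])
  have e: "(\<lambda>y. ext_u \<Omega> \<eta> s0 u y s) = (\<lambda>y. if y \<in> frontier \<Omega> then u y s else if y \<in> Cl then u (prj y) s else 0)"
    by (simp add: ext_eq)
  have "(\<lambda>y. ext_u \<Omega> \<eta> s0 u y s) \<in> borel_measurable borel" unfolding e by (rule measE[OF c])
  then have "(\<lambda>y. J (x - y) * ext_u \<Omega> \<eta> s0 u y s powr p) \<in> borel_measurable borel"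
    using Jx_borel by measurable
  then show "(\<lambda>y. J (x - y) * ext_u \<Omega> \<eta> s0 u y s powr p) \<in> borel_measurable (lebesgue_on (- \<Omega>))"
    by (rule borel_to_leb)
  show "\<bar>J (x - y) * ext_u \<Omega> \<eta> s0 u y s powr p\<bar> \<le> Jm" for y
  proof -
    have "J (x - y) * \<bar>ext_u \<Omega> \<eta> s0 u y s powr p\<bar> \<le> Jm * 1"
      by (rule mult_mono) (use Jm J_nonneg ext_pow_bnd[where u=u and s=s and y=y, OF b] in auto)
    then show ?thesis by (simp add: abs_mult J_nonneg)
  qed
  show "J (x - y) * ext_u \<Omega> \<eta> s0 u y s powr p = 0" if "y \<notin> cbox (-bx) bx" for y
    using bx'[OF x that] by simp
qed (use Jm in auto)

definition "A x = integral \<Omega> (\<lambda>y. J (x - y))"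
definition "B x = integral (- \<Omega>) (\<lambda>y. J (x - y))"
definition "Ku u x s = integral \<Omega> (\<lambda>y. J (x - y) * u y s)"
definition "Gu u x s = integral (- \<Omega>) (\<lambda>y. J (x - y) * ext_u \<Omega> \<eta> s0 u y s powr p)"
definition "hh u x s = Ku u x s + Gu u x s"
definition "T = 1 / (4 * L)"
definition "Ip u x t = integral {0..t} (\<lambda>s. exp (A x * s) * hh u x s)"
definition "Phi u x t = exp (- (A x * t)) * Ip u x t"

definition "adm u \<longleftrightarrow>
  (\<forall>y\<in>closure \<Omega>. \<forall>s\<in>{0..T}. 0 \<le> u y s \<and> u y s \<le> 1) \<and>
  (\<forall>x\<in>closure \<Omega>. \<forall>s\<in>{0..T}. (\<lambda>y. J (x - y) * u y s) integrable_on \<Omega>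
       \<and> (\<lambda>y. J (x - y) * ext_u \<Omega> \<eta> s0 u y s powr p) integrable_on (- \<Omega>)) \<and>
  (\<forall>x\<in>closure \<Omega>. (\<lambda>s. exp (A x * s) * hh u x s) integrable_on {0..T})"

lemma T_pos: "T > 0" using L_ge1 by (simp add: T_def)
lemma T_le: "T \<le> 1/4" using L_ge1 by (simp add: T_def field_simps)
lemma LT: "L * T = 1/4" using L_ge1 by (simp add: T_def)

lemma A_bnd: "x \<in> closure \<Omega> \<Longrightarrow> 0 \<le> A x \<and> A x \<le> L - 1"
proof -
  assume x: "x \<in> closure \<Omega>"
  have "\<bar>integral \<Omega> (\<lambda>y. J (x - y) * 1)\<bar> \<le> L - 1" by (rule IB[OF x]) (use int_J[OF Om_leb x] in auto)
  moreover have "0 \<le> A x" unfolding A_def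
    by (rule Henstock_Kurzweil_Integration.integral_nonneg[OF int_J[OF Om_leb x]]) (simp add: J_nonneg)
  ultimately show ?thesis by (simp add: A_def)
qed

lemma B_bnd: "x \<in> closure \<Omega> \<Longrightarrow> 0 \<le> B x \<and> B x \<le> L - 1"
proof -
  assume x: "x \<in> closure \<Omega>"
  have "\<bar>integral (- \<Omega>) (\<lambda>y. J (x - y) * 1)\<bar> \<le> L - 1" by (rule IB[OF x]) (use int_J[OF cOm_leb x] in auto)
  moreover have "0 \<le> B x" unfolding B_def
    by (rule Henstock_Kurzweil_Integration.integral_nonneg[OF int_J[OF cOm_leb x]]) (simp add: J_nonneg)
  ultimately show ?thesis by (simp add: B_def)
qed

lemma adm_D1: "adm u \<Longrightarrow> y \<in> closure \<Omega> \<Longrightarrow> s \<in> {0..T} \<Longrightarrow> 0 \<le> u y s \<and> u y s \<le> 1"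
  unfolding adm_def by blast
lemma adm_D2: "adm u \<Longrightarrow> x \<in> closure \<Omega> \<Longrightarrow> s \<in> {0..T} \<Longrightarrow> (\<lambda>y. J (x - y) * u y s) integrable_on \<Omega>"
  unfolding adm_def by blast
lemma adm_D3: "adm u \<Longrightarrow> x \<in> closure \<Omega> \<Longrightarrow> s \<in> {0..T} \<Longrightarrow> (\<lambda>y. J (x - y) * ext_u \<Omega> \<eta> s0 u y s powr p) integrable_on (- \<Omega>)"
  unfolding adm_def by blast
lemma adm_D4: "adm u \<Longrightarrow> x \<in> closure \<Omega> \<Longrightarrow> (\<lambda>s. exp (A x * s) * hh u x s) integrable_on {0..T}"
  unfolding adm_def by blast

lemma adm_Fr: "adm u \<Longrightarrow> s \<in> {0..T} \<Longrightarrow> z \<in> frontier \<Omega> \<Longrightarrow> 0 \<le> u z s \<and> u z s \<le> 1"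
  using adm_D1 Fr_K by blast

lemma Ku_bnd: assumes "adm u" "x \<in> closure \<Omega>" "s \<in> {0..T}" shows "0 \<le> Ku u x s \<and> Ku u x s \<le> L - 1"
proof -
  have "\<bar>Ku u x s\<bar> \<le> L - 1" unfolding Ku_def
    by (rule IB[OF assms(2) adm_D2[OF assms]]) (use adm_D1[OF assms(1) _ assms(3)] Om_K in auto)
  moreover have "0 \<le> Ku u x s" unfolding Ku_def
    by (rule Henstock_Kurzweil_Integration.integral_nonneg[OF adm_D2[OF assms]])
       (use adm_D1[OF assms(1) _ assms(3)] Om_K J_nonneg in auto)
  ultimately show ?thesis by simp
qed

lemma Gu_bnd: assumes "adm u" "x \<in> closure \<Omega>" "s \<in> {0..T}" shows "0 \<le> Gu u x s \<and> Gu u x s \<le> L - 1"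
proof -
  have b: "0 \<le> ext_u \<Omega> \<eta> s0 u y s powr p \<and> ext_u \<Omega> \<eta> s0 u y s powr p \<le> 1" for y
    by (rule ext_pow_bnd) (use adm_Fr[OF assms(1) assms(3)] in auto)
  have "\<bar>Gu u x s\<bar> \<le> L - 1" unfolding Gu_def
    by (rule IB[OF assms(2) adm_D3[OF assms]]) (use b in auto)
  moreover have "0 \<le> Gu u x s" unfolding Gu_def
    by (rule Henstock_Kurzweil_Integration.integral_nonneg[OF adm_D3[OF assms]]) (use b J_nonneg in auto)
  ultimately show ?thesis by simp
qed

lemma hh_bnd: assumes "adm u" "x \<in> closure \<Omega>" "s \<in> {0..T}" shows "0 \<le> hh u x s \<and> hh u x s \<le> 2 * L"
  using Ku_bnd[OF assms] Gu_bnd[OF assms] by (simp add: hh_def)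

lemma exp_14: "exp (1/4::real) \<le> 2"
proof -
  have "norm (exp (1/4::real)) \<le> 1 + 2 * norm (1/4::real)" by (rule exp_bound_lemma) simp
  then show ?thesis by simp
qed

lemma As_bnd: assumes "x \<in> closure \<Omega>" "s \<in> {0..T}" shows "0 \<le> A x * s \<and> A x * s \<le> 1/4"
proof -
  have "A x * s \<le> L * T" using A_bnd[OF assms(1)] assms(2) by (intro mult_mono) auto
  then show ?thesis using A_bnd[OF assms(1)] assms(2) LT by auto
qed

lemma expAs_bnd: assumes "x \<in> closure \<Omega>" "s \<in> {0..T}" shows "1 \<le> exp (A x * s) \<and> exp (A x * s) \<le> 2"
proof -
  have e1: "exp (A x * s) \<le> exp (1/4)" using As_bnd[OF assms] by simp
  have e2: "1 \<le> exp (A x * s)" using As_bnd[OF assms] by simp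
  show ?thesis using e1 e2 exp_14 by linarith
qed

lemma int_sub: assumes "adm u" "x \<in> closure \<Omega>" "t \<in> {0..T}" "a \<ge> 0" "a \<le> t"
  shows "(\<lambda>s. exp (A x * s) * hh u x s) integrable_on {a..t}"
  by (rule integrable_subinterval_real[OF adm_D4[OF assms(1,2)]]) (use assms in auto)

end


context P53 begin

lemma Ip_bnd: assumes u: "adm u" and x: "x \<in> closure \<Omega>" and t: "t \<in> {0..T}"
  shows "0 \<le> Ip u x t \<and> Ip u x t \<le> exp (A x * t) * (2 * L) * t"
proof -
  have i: "(\<lambda>s. exp (A x * s) * hh u x s) integrable_on {0..t}" by (rule int_sub[OF u x t]) (use t in auto)
  have pt: "0 \<le> exp (A x * s) * hh u x s \<and> exp (A x * s) * hh u x s \<le> exp (A x * t) * (2 * L)" if s: "s \<in> {0..t}" for s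
  proof -
    have sT: "s \<in> {0..T}" using s t by auto
    have "exp (A x * s) \<le> exp (A x * t)" using A_bnd[OF x] s by (simp add: mult_left_mono)
    then show ?thesis using hh_bnd[OF u x sT] by (simp add: mult_mono)
  qed
  have "Ip u x t \<le> integral {0..t} (\<lambda>s. exp (A x * t) * (2 * L))" unfolding Ip_def
    by (rule Henstock_Kurzweil_Integration.integral_le[OF i]) (use pt in auto)
  also have "\<dots> = exp (A x * t) * (2 * L) * t" using t by simp
  finally have "Ip u x t \<le> exp (A x * t) * (2 * L) * t" .
  moreover have "0 \<le> Ip u x t" unfolding Ip_def
    by (rule Henstock_Kurzweil_Integration.integral_nonneg[OF i]) (use pt in auto)
  ultimately show ?thesis by simp
qed

lemma Phi_bnd: assumes u: "adm u" and x: "x \<in> closure \<Omega>" and t: "t \<in> {0..T}"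
  shows "0 \<le> Phi u x t \<and> Phi u x t \<le> 2 * L * t \<and> Phi u x t \<le> 1/2"
proof -
  have "Phi u x t \<le> exp (- (A x * t)) * (exp (A x * t) * (2 * L) * t)"
    unfolding Phi_def using Ip_bnd[OF assms] by (intro mult_left_mono) auto
  also have "\<dots> = 2 * L * t" by (simp add: exp_minus field_simps)
  finally have a: "Phi u x t \<le> 2 * L * t" .
  have "2 * L * t \<le> 2 * L * T" using t L_ge1 by auto
  also have "\<dots> = 1/2" using LT by simp
  finally show ?thesis using a Ip_bnd[OF assms] by (simp add: Phi_def)
qed

lemma A_cont: "continuous_on (closure \<Omega>) A"
  unfolding continuous_on_iff
proof (intro ballI allI impI)
  fix x e assume x: "x \<in> closure \<Omega>" and e: "(0::real) < e"
  obtain \<delta> where \<delta>: "\<delta> > 0" and H: "\<forall>x\<in>closure \<Omega>. \<forall>x'\<in>closure \<Omega>. dist x x' < \<delta> \<longrightarrow>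
     (\<forall>S g. (\<lambda>y. J (x - y) * g y) integrable_on S \<longrightarrow> (\<lambda>y. J (x' - y) * g y) integrable_on S
        \<longrightarrow> (\<forall>y\<in>S. \<bar>g y\<bar> \<le> 1)
        \<longrightarrow> \<bar>integral S (\<lambda>y. J (x - y) * g y) - integral S (\<lambda>y. J (x' - y) * g y)\<bar> \<le> e / 2)"
    using KL[of "e/2"] e by auto
  show "\<exists>d>0. \<forall>x'\<in>closure \<Omega>. dist x' x < d \<longrightarrow> dist (A x') (A x) < e"
  proof (intro exI[of _ \<delta>] conjI ballI impI)
    fix x' assume x': "x' \<in> closure \<Omega>" and d: "dist x' x < \<delta>"
    have "\<bar>integral \<Omega> (\<lambda>y. J (x' - y) * 1) - integral \<Omega> (\<lambda>y. J (x - y) * 1)\<bar> \<le> e / 2"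
      using H[rule_format, OF x' x d, where S=\<Omega> and g="\<lambda>_. 1"] int_J[OF Om_leb x] int_J[OF Om_leb x'] by simp
    then show "dist (A x') (A x) < e" using e by (simp add: A_def dist_real_def)
  qed (use \<delta> in auto)
qed

lemma hh_mod: assumes u: "adm u" and e: "e > 0"
  shows "\<exists>\<delta>>0. \<forall>x\<in>closure \<Omega>. \<forall>x'\<in>closure \<Omega>. dist x x' < \<delta> \<longrightarrow>
     \<bar>A x - A x'\<bar> \<le> e \<and> (\<forall>s\<in>{0..T}. \<bar>hh u x s - hh u x' s\<bar> \<le> 2 * e)"
proof -
  obtain \<delta> where \<delta>: "\<delta> > 0" and H: "\<forall>x\<in>closure \<Omega>. \<forall>x'\<in>closure \<Omega>. dist x x' < \<delta> \<longrightarrow>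
     (\<forall>S g. (\<lambda>y. J (x - y) * g y) integrable_on S \<longrightarrow> (\<lambda>y. J (x' - y) * g y) integrable_on S
        \<longrightarrow> (\<forall>y\<in>S. \<bar>g y\<bar> \<le> 1)
        \<longrightarrow> \<bar>integral S (\<lambda>y. J (x - y) * g y) - integral S (\<lambda>y. J (x' - y) * g y)\<bar> \<le> e)"
    using KL[OF e] by auto
  show ?thesis
  proof (intro exI[of _ \<delta>] conjI ballI impI)
    fix x x' assume x: "x \<in> closure \<Omega>" and x': "x' \<in> closure \<Omega>" and d: "dist x x' < \<delta>"
    have "\<bar>integral \<Omega> (\<lambda>y. J (x - y) * 1) - integral \<Omega> (\<lambda>y. J (x' - y) * 1)\<bar> \<le> e"
      using H[rule_format, OF x x' d, where S=\<Omega> and g="\<lambda>_. 1"] int_J[OF Om_leb x] int_J[OF Om_leb x'] by simp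
    then show "\<bar>A x - A x'\<bar> \<le> e" by (simp add: A_def)
    fix s assume s: "s \<in> {0..T}"
    have b1: "\<forall>y\<in>\<Omega>. \<bar>u y s\<bar> \<le> 1" using adm_D1[OF u _ s] Om_K by fastforce
    have k: "\<bar>Ku u x s - Ku u x' s\<bar> \<le> e" unfolding Ku_def
      by (rule H[rule_format, OF x x' d adm_D2[OF u x s] adm_D2[OF u x' s]]) (use b1 in auto)
    have b2: "\<forall>y\<in>- \<Omega>. \<bar>ext_u \<Omega> \<eta> s0 u y s powr p\<bar> \<le> 1"
      using ext_pow_bnd[where u=u and s=s] adm_Fr[OF u s] by fastforce
    have g: "\<bar>Gu u x s - Gu u x' s\<bar> \<le> e" unfolding Gu_def
      by (rule H[rule_format, OF x x' d adm_D3[OF u x s] adm_D3[OF u x' s]]) (use b2 in auto)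
    show "\<bar>hh u x s - hh u x' s\<bar> \<le> 2 * e" using k g by (simp add: hh_def)
  qed (use \<delta> in auto)
qed

lemma exp_lip: fixes a b :: real assumes "0 \<le> a" "a \<le> 1/4" "0 \<le> b" "b \<le> 1/4" shows "\<bar>exp a - exp b\<bar> \<le> 2 * \<bar>a - b\<bar>"
proof -
  have *: "exp y - exp x \<le> 2 * (y - x)" if "x \<le> y" "y \<le> 1/4" for x y :: real
  proof -
    have "1 + (x - y) \<le> exp (x - y)" by (rule exp_ge_add_one_self)
    then have "exp y * (1 + (x - y)) \<le> exp y * exp (x - y)" by (simp add: mult_left_mono)
    also have "\<dots> = exp x" by (simp add: exp_diff)
    finally have "exp y - exp x \<le> exp y * (y - x)" by (simp add: algebra_simps)
    also have "\<dots> \<le> 2 * (y - x)"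
    proof (rule mult_right_mono)
      have "exp y \<le> exp (1/4)" using that by simp
      then show "exp y \<le> 2" using exp_14 by linarith
    qed (use that in simp)
    finally show ?thesis .
  qed
  show ?thesis
  proof (cases "a \<le> b")
    case True
    then have "exp a \<le> exp b" by simp
    then show ?thesis using *[OF True assms(4)] True by simp
  next
    case False
    then have "exp b \<le> exp a" by simp
    then show ?thesis using *[of b a] False assms by simp
  qed
qed

lemma Ip_tdiff: assumes u: "adm u" and x: "x \<in> closure \<Omega>" and t: "t \<in> {0..T}" and t': "t' \<in> {0..T}"
  shows "\<bar>Ip u x t' - Ip u x t\<bar> \<le> 4 * L * \<bar>t' - t\<bar>"
proof -
  have main: "\<bar>Ip u x b - Ip u x a\<bar> \<le> 4 * L * (b - a)" if ab: "a \<le> b" "a \<in> {0..T}" "b \<in> {0..T}" for a b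
  proof -
    let ?f = "\<lambda>s. exp (A x * s) * hh u x s"
    have ib: "?f integrable_on {0..b}" by (rule int_sub[OF u x ab(3)]) (use ab in auto)
    have iab: "?f integrable_on {a..b}" by (rule int_sub[OF u x ab(3)]) (use ab in auto)
    have "Ip u x b = Ip u x a + integral {a..b} ?f"
      unfolding Ip_def using Henstock_Kurzweil_Integration.integral_combine[OF _ _ ib, of a] ab by simp
    then have "\<bar>Ip u x b - Ip u x a\<bar> = norm (integral {a..b} ?f)" by simp
    also have "\<dots> \<le> integral {a..b} (\<lambda>s. 4 * L)"
    proof (rule integral_norm_bound_integral[OF iab])
      fix s assume s: "s \<in> {a..b}"
      then have sT: "s \<in> {0..T}" using ab by auto
      have "exp (A x * s) * hh u x s \<le> 2 * (2 * L)"
        using expAs_bnd[OF x sT] hh_bnd[OF u x sT] by (intro mult_mono) auto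
      then show "norm (?f s) \<le> 4 * L" using expAs_bnd[OF x sT] hh_bnd[OF u x sT] by simp
    qed auto
    also have "\<dots> = 4 * L * (b - a)" using ab by simp
    finally show ?thesis .
  qed
  show ?thesis
  proof (cases "t \<le> t'")
    case True then show ?thesis using main[OF True t t'] by simp
  next
    case False then show ?thesis using main[of t' t] t t' by (simp add: abs_minus_commute)
  qed
qed

end


context P53 begin

lemma Ip_xdiff: assumes u: "adm u" and x: "x \<in> closure \<Omega>" and x': "x' \<in> closure \<Omega>" and t: "t \<in> {0..T}"
  and e: "0 \<le> e" and dA: "\<bar>A x - A x'\<bar> \<le> e" and dh: "\<forall>s\<in>{0..T}. \<bar>hh u x s - hh u x' s\<bar> \<le> 2 * e"
  shows "\<bar>Ip u x' t - Ip u x t\<bar> \<le> 5 * e * t"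
proof -
  let ?f = "\<lambda>s. exp (A x * s) * hh u x s" and ?f' = "\<lambda>s. exp (A x' * s) * hh u x' s"
  have i: "?f integrable_on {0..t}" by (rule int_sub[OF u x t]) (use t in auto)
  have i': "?f' integrable_on {0..t}" by (rule int_sub[OF u x' t]) (use t in auto)
  have "Ip u x' t - Ip u x t = integral {0..t} (\<lambda>s. ?f' s - ?f s)"
    unfolding Ip_def by (simp add: integral_diff[OF i' i])
  then have "\<bar>Ip u x' t - Ip u x t\<bar> = norm (integral {0..t} (\<lambda>s. ?f' s - ?f s))" by simp
  also have "\<dots> \<le> integral {0..t} (\<lambda>s. 5 * e)"
  proof (rule integral_norm_bound_integral[OF integrable_diff[OF i' i]])
    fix s assume s: "s \<in> {0..t}"
    then have sT: "s \<in> {0..T}" using t by auto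
    have eq: "?f' s - ?f s = (exp (A x' * s) - exp (A x * s)) * hh u x' s + exp (A x * s) * (hh u x' s - hh u x s)"
      by (simp add: algebra_simps)
    have "\<bar>exp (A x' * s) - exp (A x * s)\<bar> \<le> 2 * \<bar>A x' * s - A x * s\<bar>"
      by (rule exp_lip) (use As_bnd[OF x sT] As_bnd[OF x' sT] in auto)
    also have "\<dots> = 2 * (\<bar>A x' - A x\<bar> * s)" using sT by (simp add: abs_mult left_diff_distrib[symmetric])
    also have "\<dots> \<le> 2 * (e * T)" using dA sT by (intro mult_left_mono mult_mono) (auto simp: abs_minus_commute)
    finally have d1: "\<bar>exp (A x' * s) - exp (A x * s)\<bar> \<le> 2 * (e * T)" .
    have t1: "\<bar>(exp (A x' * s) - exp (A x * s)) * hh u x' s\<bar> \<le> 2 * (e * T) * (2 * L)"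
      unfolding abs_mult using d1 hh_bnd[OF u x' sT] by (intro mult_mono) auto
    have "2 * (e * T) * (2 * L) = e" using LT by (simp add: algebra_simps)
    with t1 have t1': "\<bar>(exp (A x' * s) - exp (A x * s)) * hh u x' s\<bar> \<le> e" by simp
    have t2: "\<bar>exp (A x * s) * (hh u x' s - hh u x s)\<bar> \<le> 2 * (2 * e)"
      unfolding abs_mult using expAs_bnd[OF x sT] dh sT by (intro mult_mono) (auto simp: abs_minus_commute)
    show "norm (?f' s - ?f s) \<le> 5 * e" unfolding eq real_norm_def using t1' t2 abs_triangle_ineq
      by (smt (verit))
  qed auto
  also have "\<dots> = 5 * e * t" using t by simp
  finally show ?thesis .
qed

lemma Ip_cont: assumes u: "adm u" shows "continuous_on (closure \<Omega> \<times> {0..T}) (\<lambda>q. Ip u (fst q) (snd q))"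
  unfolding continuous_on_iff
proof (intro ballI allI impI)
  fix q :: "'a \<times> real" and e :: real assume q: "q \<in> closure \<Omega> \<times> {0..T}" and e: "0 < e"
  obtain x t where qxt: "q = (x, t)" by (cases q)
  have x: "x \<in> closure \<Omega>" and t: "t \<in> {0..T}" using q qxt by auto
  obtain \<delta>1 where \<delta>1: "\<delta>1 > 0" and H: "\<forall>x\<in>closure \<Omega>. \<forall>x'\<in>closure \<Omega>. dist x x' < \<delta>1 \<longrightarrow>
     \<bar>A x - A x'\<bar> \<le> e / 8 \<and> (\<forall>s\<in>{0..T}. \<bar>hh u x s - hh u x' s\<bar> \<le> 2 * (e / 8))"
    using hh_mod[OF u, of "e / 8"] e by auto
  have L0: "L > 0" using L_ge1 by simp
  show "\<exists>d>0. \<forall>q'\<in>closure \<Omega> \<times> {0..T}. dist q' q < d \<longrightarrow> dist (Ip u (fst q') (snd q')) (Ip u (fst q) (snd q)) < e"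
  proof (intro exI[of _ "min \<delta>1 (e / (8 * L))"] conjI ballI impI)
    show "min \<delta>1 (e / (8 * L)) > 0" using \<delta>1 e L0 by simp
    fix q' assume q': "q' \<in> closure \<Omega> \<times> {0..T}" and dq: "dist q' q < min \<delta>1 (e / (8 * L))"
    obtain x' t' where q'xt: "q' = (x', t')" by (cases q')
    have x': "x' \<in> closure \<Omega>" and t': "t' \<in> {0..T}" using q' q'xt by auto
    have dx: "dist x x' < \<delta>1"
      using dist_fst_le[of q' q] dq qxt q'xt by (simp add: dist_commute)
    have dt: "\<bar>t' - t\<bar> < e / (8 * L)"
      using dist_snd_le[of q' q] dq qxt q'xt by (simp add: dist_real_def)
    have H': "\<bar>A x - A x'\<bar> \<le> e / 8" "\<forall>s\<in>{0..T}. \<bar>hh u x s - hh u x' s\<bar> \<le> 2 * (e / 8)"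
      using H x x' dx by auto
    have a1: "\<bar>Ip u x' t' - Ip u x' t\<bar> \<le> 4 * L * \<bar>t' - t\<bar>" by (rule Ip_tdiff[OF u x' t t'])
    have "4 * L * \<bar>t' - t\<bar> \<le> 4 * L * (e / (8 * L))" using dt L0 by (intro mult_left_mono) auto
    also have "\<dots> = e / 2" using L0 by simp
    finally have a1': "\<bar>Ip u x' t' - Ip u x' t\<bar> \<le> e / 2" using a1 by linarith
    have a2: "\<bar>Ip u x' t - Ip u x t\<bar> \<le> 5 * (e / 8) * t"
      by (rule Ip_xdiff[OF u x x' t _ H'(1) H'(2)]) (use e in simp)
    have "5 * (e / 8) * t \<le> 5 * (e / 8) * (1/4)" using t T_le e by (intro mult_left_mono) auto
    with a2 have a2': "\<bar>Ip u x' t - Ip u x t\<bar> \<le> 5 * e / 32" by simp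
    have "\<bar>Ip u x' t' - Ip u x t\<bar> \<le> e / 2 + 5 * e / 32" using a1' a2' by linarith
    then show "dist (Ip u (fst q') (snd q')) (Ip u (fst q) (snd q)) < e"
      using e qxt q'xt by (simp add: dist_real_def)
  qed
qed

lemma Phi_cont: assumes u: "adm u" shows "continuous_on (closure \<Omega> \<times> {0..T}) (\<lambda>q. Phi u (fst q) (snd q))"
proof -
  have cA: "continuous_on (closure \<Omega> \<times> {0..T}) (\<lambda>q. A (fst q))"
    by (rule continuous_on_compose2[OF A_cont continuous_on_fst]) auto
  have "continuous_on (closure \<Omega> \<times> {0..T}) (\<lambda>q. exp (- (A (fst q) * snd q)) * Ip u (fst q) (snd q))"
    by (intro continuous_intros cA Ip_cont[OF u])
  then show ?thesis by (simp add: Phi_def)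
qed

end


context P53 begin

definition "ucont u \<longleftrightarrow> continuous_on (closure \<Omega> \<times> {0..T}) (\<lambda>q. u (fst q) (snd q))
   \<and> (\<forall>y\<in>closure \<Omega>. \<forall>s\<in>{0..T}. 0 \<le> u y s \<and> u y s \<le> 1)"

lemma slice: assumes "ucont u" "s \<in> {0..T}" "S \<subseteq> closure \<Omega>" shows "continuous_on S (\<lambda>y. u y s)"
proof -
  have c: "continuous_on (closure \<Omega> \<times> {0..T}) (\<lambda>q. u (fst q) (snd q))" using assms(1) by (simp add: ucont_def)
  have "continuous_on S (\<lambda>y. (\<lambda>q. u (fst q) (snd q)) (y, s))"
    by (rule continuous_on_compose2[OF c]) (use assms(2,3) in \<open>auto intro!: continuous_intros\<close>)
  then show ?thesis by simp
qed

lemma ucont_b: "ucont u \<Longrightarrow> y \<in> closure \<Omega> \<Longrightarrow> s \<in> {0..T} \<Longrightarrow> 0 \<le> u y s \<and> u y s \<le> 1"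
  by (simp add: ucont_def)

lemma ucont_int1: assumes u: "ucont u" and x: "x \<in> closure \<Omega>" and s: "s \<in> {0..T}"
  shows "(\<lambda>y. J (x - y) * u y s) integrable_on \<Omega>"
  by (rule int_Om[OF x slice[OF u s Om_K]]) (use ucont_b[OF u _ s] Om_K in force)

lemma ucont_int2: assumes u: "ucont u" and x: "x \<in> closure \<Omega>" and s: "s \<in> {0..T}"
  shows "(\<lambda>y. J (x - y) * ext_u \<Omega> \<eta> s0 u y s powr p) integrable_on (- \<Omega>)"
  by (rule int_cOm[where u=u and s=s, OF x slice[OF u s Fr_K]]) (use ucont_b[OF u _ s] Fr_K in force)

lemma hh_tcont: assumes u: "ucont u" and x: "x \<in> closure \<Omega>" shows "continuous_on {0..T} (hh u x)"
  unfolding continuous_on_iff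
proof (intro ballI allI impI)
  fix s e assume s: "s \<in> {0..T}" and e: "(0::real) < e"
  have L0: "L > 0" using L_ge1 by simp
  define e1 where "e1 = e / (4 * L)"
  have e1: "e1 > 0" using e L0 by (simp add: e1_def)
  have cu: "continuous_on (closure \<Omega> \<times> {0..T}) (\<lambda>q. u (fst q) (snd q))" using u by (simp add: ucont_def)
  have cp: "continuous_on (closure \<Omega> \<times> {0..T}) (\<lambda>q. u (fst q) (snd q) powr p)"
    by (rule continuous_on_powr'[OF cu continuous_on_const]) (use u p0 in \<open>auto simp: ucont_def\<close>)
  have cpt: "compact (closure \<Omega> \<times> {0..T})" by (rule compact_Times[OF K_compact compact_Icc])
  obtain d1 where d1: "d1 > 0" "\<forall>q\<in>closure \<Omega> \<times> {0..T}. \<forall>q'\<in>closure \<Omega> \<times> {0..T}. dist q' q < d1 \<longrightarrow>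
      dist (u (fst q') (snd q')) (u (fst q) (snd q)) < e1"
    using compact_uniformly_continuous[OF cu cpt] e1 unfolding uniformly_continuous_on_def by metis
  obtain d2 where d2: "d2 > 0" "\<forall>q\<in>closure \<Omega> \<times> {0..T}. \<forall>q'\<in>closure \<Omega> \<times> {0..T}. dist q' q < d2 \<longrightarrow>
      dist (u (fst q') (snd q') powr p) (u (fst q) (snd q) powr p) < e1"
    using compact_uniformly_continuous[OF cp cpt] e1 unfolding uniformly_continuous_on_def by metis
  show "\<exists>d>0. \<forall>s'\<in>{0..T}. dist s' s < d \<longrightarrow> dist (hh u x s') (hh u x s) < e"
  proof (intro exI[of _ "min d1 d2"] conjI ballI impI)
    show "min d1 d2 > 0" using d1 d2 by simp
    fix s' assume s': "s' \<in> {0..T}" and ds: "dist s' s < min d1 d2"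
    have pu: "\<bar>u y s' - u y s\<bar> < e1" if y: "y \<in> closure \<Omega>" for y
    proof -
      have "dist (y, s') (y, s) < d1" using ds by (simp add: dist_Pair_Pair)
      then show ?thesis using d1(2) y s s' by (force simp: dist_real_def)
    qed
    have pp: "\<bar>u y s' powr p - u y s powr p\<bar> < e1" if y: "y \<in> closure \<Omega>" for y
    proof -
      have "dist (y, s') (y, s) < d2" using ds by (simp add: dist_Pair_Pair)
      then show ?thesis using d2(2) y s s' by (force simp: dist_real_def)
    qed
    have iJ: "(\<lambda>y. J (x - y) * e1) integrable_on S" if "S \<in> sets lebesgue" for S
      using int_J[OF that x] by (rule integrable_on_mult_left)
    have k: "\<bar>Ku u x s' - Ku u x s\<bar> \<le> A x * e1"
    proof -
      have "Ku u x s' - Ku u x s = integral \<Omega> (\<lambda>y. J (x - y) * u y s' - J (x - y) * u y s)"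
        unfolding Ku_def by (rule integral_diff[symmetric, OF ucont_int1[OF u x s'] ucont_int1[OF u x s]])
      then have "\<bar>Ku u x s' - Ku u x s\<bar> = norm (integral \<Omega> (\<lambda>y. J (x - y) * u y s' - J (x - y) * u y s))" by simp
      also have "\<dots> \<le> integral \<Omega> (\<lambda>y. J (x - y) * e1)"
      proof (rule integral_norm_bound_integral[OF integrable_diff[OF ucont_int1[OF u x s'] ucont_int1[OF u x s]] iJ[OF Om_leb]])
        fix y assume y: "y \<in> \<Omega>"
        have "\<bar>J (x - y) * u y s' - J (x - y) * u y s\<bar> = J (x - y) * \<bar>u y s' - u y s\<bar>"
          by (simp add: abs_mult J_nonneg right_diff_distrib[symmetric])
        also have "\<dots> \<le> J (x - y) * e1" using pu[of y] y Om_K J_nonneg[of "x - y"]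
          by (intro mult_left_mono) auto
        finally show "norm (J (x - y) * u y s' - J (x - y) * u y s) \<le> J (x - y) * e1" by simp
      qed
      also have "\<dots> = A x * e1" by (simp add: A_def)
      finally show ?thesis .
    qed
    have g: "\<bar>Gu u x s' - Gu u x s\<bar> \<le> B x * e1"
    proof -
      let ?E = "\<lambda>t y. ext_u \<Omega> \<eta> s0 u y t powr p"
      have "Gu u x s' - Gu u x s = integral (- \<Omega>) (\<lambda>y. J (x - y) * ?E s' y - J (x - y) * ?E s y)"
        unfolding Gu_def by (rule integral_diff[symmetric, OF ucont_int2[OF u x s'] ucont_int2[OF u x s]])
      then have "\<bar>Gu u x s' - Gu u x s\<bar> = norm (integral (- \<Omega>) (\<lambda>y. J (x - y) * ?E s' y - J (x - y) * ?E s y))" by simp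
      also have "\<dots> \<le> integral (- \<Omega>) (\<lambda>y. J (x - y) * e1)"
      proof (rule integral_norm_bound_integral[OF integrable_diff[OF ucont_int2[OF u x s'] ucont_int2[OF u x s]] iJ[OF cOm_leb]])
        fix y assume y: "y \<in> - \<Omega>"
        show "norm (J (x - y) * ?E s' y - J (x - y) * ?E s y) \<le> J (x - y) * e1"
        proof (cases "J (x - y) = 0")
          case True then show ?thesis by simp
        next
          case False
          obtain z where z: "z \<in> frontier \<Omega>" "\<forall>u t. ext_u \<Omega> \<eta> s0 u y t = u z t"
            using ext_near[OF x _ False] y by auto
          have "\<bar>J (x - y) * ?E s' y - J (x - y) * ?E s y\<bar> = J (x - y) * \<bar>u z s' powr p - u z s powr p\<bar>"
            using z(2) by (simp add: abs_mult J_nonneg right_diff_distrib[symmetric])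
          also have "\<dots> \<le> J (x - y) * e1" using pp[of z] z(1) Fr_K J_nonneg[of "x - y"]
            by (intro mult_left_mono) auto
          finally show ?thesis by simp
        qed
      qed
      also have "\<dots> = B x * e1" by (simp add: B_def)
      finally show ?thesis .
    qed
    have "\<bar>hh u x s' - hh u x s\<bar> \<le> A x * e1 + B x * e1" using k g by (simp add: hh_def)
    also have "\<dots> \<le> L * e1 + L * e1" using A_bnd[OF x] B_bnd[OF x] e1
      by (intro add_mono mult_right_mono) auto
    also have "\<dots> < e" using L0 e by (simp add: e1_def)
    finally show "dist (hh u x s') (hh u x s) < e" by (simp add: dist_real_def)
  qed
qed

lemma ucont_adm: assumes u: "ucont u" shows "adm u"
  unfolding adm_def
proof (intro conjI ballI)
  show "0 \<le> u y s" "u y s \<le> 1" if "y \<in> closure \<Omega>" "s \<in> {0..T}" for y s using ucont_b[OF u that] by auto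
  show "(\<lambda>y. J (x - y) * u y s) integrable_on \<Omega>" if "x \<in> closure \<Omega>" "s \<in> {0..T}" for x s
    by (rule ucont_int1[OF u that])
  show "(\<lambda>y. J (x - y) * ext_u \<Omega> \<eta> s0 u y s powr p) integrable_on (- \<Omega>)" if "x \<in> closure \<Omega>" "s \<in> {0..T}" for x s
    by (rule ucont_int2[OF u that])
  fix x assume x: "x \<in> closure \<Omega>"
  have "continuous_on {0..T} (\<lambda>s. exp (A x * s) * hh u x s)"
    by (intro continuous_intros hh_tcont[OF u x])
  then show "(\<lambda>s. exp (A x * s) * hh u x s) integrable_on {0..T}"
    by (rule integrable_continuous_real)
qed

end


context P53 begin

lemma ext_mono: assumes "\<And>z. z \<in> frontier \<Omega> \<Longrightarrow> u z s \<le> v z s"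
  shows "ext_u \<Omega> \<eta> s0 u y s \<le> ext_u \<Omega> \<eta> s0 v y s"
  using ext_cases[of y] assms by auto

lemma hh_mono: assumes u: "adm u" and v: "adm v" and le: "\<And>y s. y \<in> closure \<Omega> \<Longrightarrow> s \<in> {0..T} \<Longrightarrow> u y s \<le> v y s"
  and x: "x \<in> closure \<Omega>" and s: "s \<in> {0..T}"
  shows "hh u x s \<le> hh v x s"
proof -
  have "Ku u x s \<le> Ku v x s" unfolding Ku_def
  proof (rule Henstock_Kurzweil_Integration.integral_le[OF adm_D2[OF u x s] adm_D2[OF v x s]])
    fix y assume "y \<in> \<Omega>"
    then show "J (x - y) * u y s \<le> J (x - y) * v y s" using le[of y s] s Om_K J_nonneg[of "x - y"]
      by (intro mult_left_mono) auto
  qed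
  moreover have "Gu u x s \<le> Gu v x s" unfolding Gu_def
  proof (rule Henstock_Kurzweil_Integration.integral_le[OF adm_D3[OF u x s] adm_D3[OF v x s]])
    fix y
    have e: "ext_u \<Omega> \<eta> s0 u y s \<le> ext_u \<Omega> \<eta> s0 v y s" by (rule ext_mono) (use le s Fr_K in auto)
    have "0 \<le> ext_u \<Omega> \<eta> s0 u y s" using ext_bnd[where u=u and s=s] adm_Fr[OF u s] by blast
    then have "ext_u \<Omega> \<eta> s0 u y s powr p \<le> ext_u \<Omega> \<eta> s0 v y s powr p" using e p0 by (intro powr_mono2) auto
    then show "J (x - y) * ext_u \<Omega> \<eta> s0 u y s powr p \<le> J (x - y) * ext_u \<Omega> \<eta> s0 v y s powr p"
      using J_nonneg[of "x - y"] by (intro mult_left_mono) auto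
  qed
  ultimately show ?thesis by (simp add: hh_def)
qed

lemma Phi_mono: assumes u: "adm u" and v: "adm v" and le: "\<And>y s. y \<in> closure \<Omega> \<Longrightarrow> s \<in> {0..T} \<Longrightarrow> u y s \<le> v y s"
  and x: "x \<in> closure \<Omega>" and t: "t \<in> {0..T}"
  shows "Phi u x t \<le> Phi v x t"
proof -
  have "Ip u x t \<le> Ip v x t" unfolding Ip_def
  proof (rule Henstock_Kurzweil_Integration.integral_le)
    show "(\<lambda>s. exp (A x * s) * hh u x s) integrable_on {0..t}" by (rule int_sub[OF u x t]) (use t in auto)
    show "(\<lambda>s. exp (A x * s) * hh v x s) integrable_on {0..t}" by (rule int_sub[OF v x t]) (use t in auto)
    fix s assume "s \<in> {0..t}"
    then have sT: "s \<in> {0..T}" using t by auto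
    show "exp (A x * s) * hh u x s \<le> exp (A x * s) * hh v x s"
      using hh_mono[OF u v le x sT] by simp
  qed
  then show ?thesis unfolding Phi_def by simp
qed

lemma Phi_deriv: assumes u: "ucont u" and x: "x \<in> closure \<Omega>" and t: "t \<in> {0..T}"
  shows "(Phi u x has_real_derivative (- (A x * Phi u x t) + hh u x t)) (at t within {0..T})"
proof -
  have c: "continuous_on {0..T} (\<lambda>s. exp (A x * s) * hh u x s)"
    by (intro continuous_intros hh_tcont[OF u x])
  have d1: "(Ip u x has_real_derivative exp (A x * t) * hh u x t) (at t within {0..T})"
    unfolding has_real_derivative_iff_has_vector_derivative Ip_def
    by (rule integral_has_vector_derivative[OF c t])
  have d0: "((\<lambda>t. exp (- (A x * t))) has_real_derivative exp (- (A x * t)) * (- A x)) (at t within {0..T})"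
    by (auto intro!: derivative_eq_intros)
  have D: "((\<lambda>t. exp (- (A x * t)) * Ip u x t) has_real_derivative
      exp (- (A x * t)) * (- A x) * Ip u x t + exp (A x * t) * hh u x t * exp (- (A x * t))) (at t within {0..T})"
    by (rule DERIV_mult[OF d0 d1])
  have V: "exp (- (A x * t)) * (- A x) * Ip u x t + exp (A x * t) * hh u x t * exp (- (A x * t))
      = - (A x * Phi u x t) + hh u x t"
    by (simp add: Phi_def exp_minus field_simps)
  have fe: "Phi u x = (\<lambda>t. exp (- (A x * t)) * Ip u x t)" by (rule ext) (simp add: Phi_def)
  show ?thesis using D unfolding V fe[symmetric] .
qed

lemma B_cont: "continuous_on (closure \<Omega>) B"
  unfolding continuous_on_iff
proof (intro ballI allI impI)
  fix x e assume x: "x \<in> closure \<Omega>" and e: "(0::real) < e"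
  obtain \<delta> where \<delta>: "\<delta> > 0" and H: "\<forall>x\<in>closure \<Omega>. \<forall>x'\<in>closure \<Omega>. dist x x' < \<delta> \<longrightarrow>
     (\<forall>S g. (\<lambda>y. J (x - y) * g y) integrable_on S \<longrightarrow> (\<lambda>y. J (x' - y) * g y) integrable_on S
        \<longrightarrow> (\<forall>y\<in>S. \<bar>g y\<bar> \<le> 1)
        \<longrightarrow> \<bar>integral S (\<lambda>y. J (x - y) * g y) - integral S (\<lambda>y. J (x' - y) * g y)\<bar> \<le> e / 2)"
    using KL[of "e/2"] e by auto
  show "\<exists>d>0. \<forall>x'\<in>closure \<Omega>. dist x' x < d \<longrightarrow> dist (B x') (B x) < e"
  proof (intro exI[of _ \<delta>] conjI ballI impI)
    fix x' assume x': "x' \<in> closure \<Omega>" and d: "dist x' x < \<delta>"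
    have "\<bar>integral (- \<Omega>) (\<lambda>y. J (x' - y) * 1) - integral (- \<Omega>) (\<lambda>y. J (x - y) * 1)\<bar> \<le> e / 2"
      using H[rule_format, OF x' x d, where S="- \<Omega>" and g="\<lambda>_. 1"] int_J[OF cOm_leb x] int_J[OF cOm_leb x'] by simp
    then show "dist (B x') (B x) < e" using e by (simp add: B_def dist_real_def)
  qed (use \<delta> in auto)
qed

lemma Fr_ne: "frontier \<Omega> \<noteq> {}"
proof -
  have "\<Omega> \<noteq> UNIV" using om_bdd not_bounded_UNIV by metis
  then show ?thesis using frontier_not_empty[OF om_ne] by blast
qed

lemma B_pos: assumes z: "z \<in> frontier \<Omega>" shows "B z > 0"
proof -
  define y1 where "y1 = z + (d / 2) *\<^sub>R \<eta> z"
  have y1C: "y1 \<in> Cl" unfolding y1_def using z d_pos ds0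
    by (intro iffD1[OF ex_iff_Cl] exI[of _ z] exI[of _ "d/2"]) auto
  have nz: "norm (z - y1) = d / 2" using eta_norm[OF z] d_pos by (simp add: y1_def)
  define m where "m = J (z - y1) / 2"
  have m: "m > 0" using J_pos[of "z - y1"] nz d_pos by (simp add: m_def)
  obtain r where r: "r > 0" "\<forall>w. dist w (z - y1) < r \<longrightarrow> dist (J w) (J (z - y1)) < m"
    using J_cont m unfolding continuous_on_iff by (metis UNIV_I)
  obtain r2 where r2: "r2 > 0" "ball y1 r2 \<subseteq> Cl" using Cl_open y1C open_contains_ball by blast
  obtain a b where ab: "cbox a b \<subseteq> ball y1 (min r r2)" "y1 \<in> box a b" "\<forall>i\<in>Basis. a \<bullet> i < b \<bullet> i"
    using open_contains_cbox[of "ball y1 (min r r2)" y1] r r2 by auto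
  have sub: "cbox a b \<subseteq> - \<Omega>" using ab(1) r2(2) Cl_disj closure_subset by fastforce
  have Jm': "m \<le> J (z - y)" if "y \<in> cbox a b" for y
  proof -
    have "dist y y1 < r" using ab(1) that by (auto simp: dist_commute)
    then have "dist (z - y) (z - y1) < r" by (simp add: dist_norm norm_minus_commute)
    then have "dist (J (z - y)) (J (z - y1)) < m" using r(2) by blast
    then show ?thesis unfolding m_def dist_real_def by linarith
  qed
  let ?g = "\<lambda>y. if y \<in> cbox a b then m else 0"
  have eqg: "(\<lambda>y. if y \<in> - \<Omega> then ?g y else 0) = ?g" using sub by (auto simp: fun_eq_iff)
  have ig: "?g integrable_on (- \<Omega>)"
  proof -
    have "?g integrable_on UNIV"
      using Henstock_Kurzweil_Integration.integrable_restrict_UNIV[of "cbox a b" "\<lambda>_. m"]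
        Henstock_Kurzweil_Integration.integrable_const[of m a b] by simp
    then show ?thesis using Henstock_Kurzweil_Integration.integrable_restrict_UNIV[of "- \<Omega>" ?g] eqg by simp
  qed
  have "integral (- \<Omega>) ?g = integral UNIV ?g"
    using Henstock_Kurzweil_Integration.integral_restrict_UNIV[of "- \<Omega>" ?g] eqg by simp
  also have "\<dots> = measure lborel (cbox a b) * m"
    using Henstock_Kurzweil_Integration.integral_restrict_UNIV[of "cbox a b" "\<lambda>_. m"]
      Henstock_Kurzweil_Integration.integral_const[of a b m] by simp
  finally have ival: "integral (- \<Omega>) ?g = measure lborel (cbox a b) * m" .
  have "integral (- \<Omega>) ?g \<le> B z" unfolding B_def
    by (rule Henstock_Kurzweil_Integration.integral_le[OF ig int_J[OF cOm_leb]]) (use z Fr_K Jm' J_nonneg in auto)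
  moreover have "measure lborel (cbox a b) * m > 0" using content_pos_lt[OF ab(3)] m by simp
  ultimately show ?thesis using ival by simp
qed

lemma beta_ex: "\<exists>\<beta>>0. \<forall>z\<in>frontier \<Omega>. \<beta> \<le> B z"
proof -
  obtain z0 where z0: "z0 \<in> frontier \<Omega>" "\<forall>z\<in>frontier \<Omega>. B z0 \<le> B z"
    using continuous_attains_inf[OF Fr_compact Fr_ne continuous_on_subset[OF B_cont Fr_K]] by blast
  then show ?thesis using B_pos[OF z0(1)] by blast
qed

end


context P53 begin

definition "beta = (SOME \<beta>. \<beta> > 0 \<and> (\<forall>z\<in>frontier \<Omega>. \<beta> \<le> B z))"
lemma beta: "beta > 0" "\<And>z. z \<in> frontier \<Omega> \<Longrightarrow> beta \<le> B z"
  using someI_ex[OF beta_ex] unfolding beta_def by auto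

definition "rr = 1 / (1 - p)"
lemma rr: "rr > 1" "rr * p = rr - 1"
  using p0 p1 by (auto simp: rr_def field_simps)

definition "cc = beta / 2 powr (rr + 1)"
definition "phl t = (cc * t) powr rr"

lemma cc_pos: "cc > 0" using beta by (simp add: cc_def)

lemma beta_le: "beta \<le> L - 1"
proof -
  obtain z where "z \<in> frontier \<Omega>" using Fr_ne by blast
  then show ?thesis using beta(2) B_bnd Fr_K by fastforce
qed

lemma cc_le: "cc \<le> beta / 2"
proof -
  have "2 powr (rr + 1) \<ge> 2 powr 1" using rr by (intro powr_mono) auto
  then have "2 \<le> 2 powr (rr + 1)" by simp
  then show ?thesis unfolding cc_def using beta by (intro divide_left_mono) auto
qed

lemma ccT: "cc * T \<le> 1"
proof -
  have L0: "L > 0" using L_ge1 by simp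
  have "cc * T \<le> (L - 1) / 2 * T" using cc_le beta_le T_pos by (intro mult_right_mono) auto
  also have "\<dots> \<le> L * T" using T_pos L0 by (intro mult_right_mono) auto
  also have "\<dots> \<le> 1" using LT by simp
  finally show ?thesis .
qed

lemma phl_bnd: "t \<in> {0..T} \<Longrightarrow> 0 \<le> phl t \<and> phl t \<le> 1"
proof -
  assume t: "t \<in> {0..T}"
  have "cc * t \<le> cc * T" using t cc_pos by (intro mult_left_mono) auto
  then have "cc * t \<le> 1" using ccT by linarith
  moreover have "0 \<le> cc * t" using t cc_pos by simp
  ultimately show ?thesis unfolding phl_def using rr by (auto intro: powr_le1)
qed

lemma phl_mono: "0 \<le> s \<Longrightarrow> s \<le> t \<Longrightarrow> phl s \<le> phl t"
  unfolding phl_def using cc_pos rr by (intro powr_mono2) (auto intro: mult_left_mono)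

lemma phl_pos: "t > 0 \<Longrightarrow> phl t > 0"
  unfolding phl_def using cc_pos by simp

lemma Gu_low: assumes u: "adm u" and low: "\<And>z s. z \<in> frontier \<Omega> \<Longrightarrow> s \<in> {0..T} \<Longrightarrow> phl s \<le> u z s"
  and z: "z \<in> frontier \<Omega>" and s: "s \<in> {0..T}"
  shows "beta * phl s powr p \<le> Gu u z s"
proof -
  have zK: "z \<in> closure \<Omega>" using z Fr_K by blast
  have "integral (- \<Omega>) (\<lambda>y. J (z - y) * phl s powr p) \<le> Gu u z s" unfolding Gu_def
  proof (rule Henstock_Kurzweil_Integration.integral_le[OF integrable_on_mult_left[OF int_J[OF cOm_leb zK]] adm_D3[OF u zK s]])
    fix y assume y: "y \<in> - \<Omega>"
    show "J (z - y) * phl s powr p \<le> J (z - y) * ext_u \<Omega> \<eta> s0 u y s powr p"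
    proof (cases "J (z - y) = 0")
      case False
      obtain z' where z': "z' \<in> frontier \<Omega>" "\<forall>u t. ext_u \<Omega> \<eta> s0 u y t = u z' t"
        using ext_near[OF zK _ False] y by auto
      have "phl s powr p \<le> u z' s powr p" using low[OF z'(1) s] phl_bnd[OF s] p0 by (intro powr_mono2) auto
      then show ?thesis using z'(2) J_nonneg[of "z - y"] by (simp add: mult_left_mono)
    qed simp
  qed
  moreover have "integral (- \<Omega>) (\<lambda>y. J (z - y) * phl s powr p) = B z * phl s powr p"
    unfolding B_def by (rule Henstock_Kurzweil_Integration.integral_mult_left)
  moreover have "beta * phl s powr p \<le> B z * phl s powr p" using beta(2)[OF z] by (simp add: mult_right_mono)
  ultimately show ?thesis by linarith
qed

lemma alg: assumes t: "t > 0"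
  shows "phl t \<le> 3 / 4 * ((t / 2) * (beta * phl (t / 2) powr p))"
proof -
  define a where "a = cc * t / 2"
  have a: "a > 0" using cc_pos t by (simp add: a_def)
  have e1: "phl (t / 2) powr p = a powr (rr - 1)"
    unfolding phl_def a_def using rr(2) by (simp add: powr_powr)
  have e2: "a * a powr (rr - 1) = a powr rr"
    using powr_add[of a 1 "rr - 1"] a by simp
  have e3: "t / 2 = a / cc" using cc_pos by (simp add: a_def)
  have e4: "beta = cc * (2 * 2 powr rr)"
    using powr_add[of 2 rr 1] by (simp add: cc_def)
  have e5: "phl t = 2 powr rr * a powr rr"
    unfolding phl_def a_def using cc_pos t by (simp add: powr_mult[symmetric])
  have "3 / 4 * ((t / 2) * (beta * phl (t / 2) powr p)) = 3 / 4 * ((t / 2) * (beta * a powr (rr - 1)))"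
    by (simp only: e1)
  also have "\<dots> = 3 / 4 * (a / cc * (cc * (2 * 2 powr rr) * a powr (rr - 1)))"
    by (simp only: e3 e4)
  also have "\<dots> = 3 / 2 * 2 powr rr * (a * a powr (rr - 1))" using cc_pos by (simp add: field_simps)
  also have "\<dots> = 3 / 2 * (2 powr rr * a powr rr)" unfolding e2 by simp
  finally have "3 / 4 * ((t / 2) * (beta * phl (t / 2) powr p)) = 3 / 2 * phl t" unfolding e5 .
  moreover have "phl t \<ge> 0" unfolding phl_def by simp
  ultimately show ?thesis by linarith
qed

lemma Phi_lower: assumes u: "adm u" and low: "\<And>z s. z \<in> frontier \<Omega> \<Longrightarrow> s \<in> {0..T} \<Longrightarrow> phl s \<le> u z s"
  and z: "z \<in> frontier \<Omega>" and t: "t \<in> {0..T}"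
  shows "phl t \<le> Phi u z t"
proof (cases "t = 0")
  case True
  then show ?thesis using Phi_bnd[OF u _ t] z Fr_K by (auto simp: phl_def)
next
  case False
  then have t0: "t > 0" using t by simp
  have zK: "z \<in> closure \<Omega>" using z Fr_K by blast
  let ?f = "\<lambda>s. exp (A z * s) * hh u z s"
  let ?k = "beta * phl (t / 2) powr p"
  have fk: "?k \<le> ?f s" if s: "s \<in> {t/2..t}" for s
  proof -
    have sT: "s \<in> {0..T}" using s t t0 by auto
    have "phl (t / 2) \<le> phl s" using s t0 by (intro phl_mono) auto
    then have "phl (t / 2) powr p \<le> phl s powr p" using phl_bnd[of "t/2"] t t0 p0 by (intro powr_mono2) auto
    then have "?k \<le> beta * phl s powr p" using beta by (simp add: mult_left_mono)
    also have "\<dots> \<le> Gu u z s" by (rule Gu_low[OF u low z sT])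
    also have "\<dots> \<le> hh u z s" using Ku_bnd[OF u zK sT] by (simp add: hh_def)
    also have "\<dots> = 1 * hh u z s" by simp
    also have "\<dots> \<le> ?f s" using expAs_bnd[OF zK sT] hh_bnd[OF u zK sT]
      by (intro mult_right_mono) auto
    finally show ?thesis .
  qed
  have f0: "0 \<le> ?f s" if "s \<in> {0..T}" for s
    using expAs_bnd[OF zK that] hh_bnd[OF u zK that] by simp
  have it: "?f integrable_on {0..t}" by (rule int_sub[OF u zK t]) (use t in auto)
  have i1: "?f integrable_on {0..t/2}" by (rule int_sub[OF u zK, of "t/2"]) (use t in auto)
  have i2: "?f integrable_on {t/2..t}" by (rule int_sub[OF u zK t]) (use t in auto)
  have "Ip u z t = integral {0..t/2} ?f + integral {t/2..t} ?f"
    unfolding Ip_def using Henstock_Kurzweil_Integration.integral_combine[OF _ _ it, of "t/2"] t0 by simp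
  moreover have "0 \<le> integral {0..t/2} ?f"
    by (rule Henstock_Kurzweil_Integration.integral_nonneg[OF i1]) (use f0 t in auto)
  moreover have "integral {t/2..t} (\<lambda>s. ?k) \<le> integral {t/2..t} ?f"
    by (rule Henstock_Kurzweil_Integration.integral_le[OF _ i2]) (use fk in auto)
  moreover have "integral {t/2..t} (\<lambda>s. ?k) = (t / 2) * ?k" using t0 by simp
  ultimately have I: "(t / 2) * ?k \<le> Ip u z t" by linarith
  have "1 - A z * t \<le> exp (- (A z * t))" using exp_ge_add_one_self[of "- (A z * t)"] by simp
  then have E: "3 / 4 \<le> exp (- (A z * t))" using As_bnd[OF zK t] by linarith
  have "3 / 4 * ((t / 2) * ?k) \<le> exp (- (A z * t)) * Ip u z t"
    using E I Ip_bnd[OF u zK t] t0 beta by (intro mult_mono) auto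
  then show ?thesis using alg[OF t0] by (simp add: Phi_def)
qed

end


context P53 begin

definition "wl x t = (if x \<in> frontier \<Omega> then phl t else 0)"

lemma wl_adm: "adm wl"
  unfolding adm_def
proof (intro conjI ballI)
  fix y s assume "y \<in> closure \<Omega>" "s \<in> {0..(T::real)}"
  then show "0 \<le> wl y s" "wl y s \<le> 1" using phl_bnd by (auto simp: wl_def)
next
  fix x s assume x: "x \<in> closure \<Omega>" and s: "s \<in> {0..T}"
  have c0: "continuous_on \<Omega> (\<lambda>y. wl y s)"
    by (rule continuous_on_eq[OF continuous_on_const[of \<Omega> 0]]) (use Fr_Om in \<open>auto simp: wl_def\<close>)
  show "(\<lambda>y. J (x - y) * wl y s) integrable_on \<Omega>"
    by (rule int_Om[OF x c0]) (use Fr_Om in \<open>auto simp: wl_def\<close>)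
  have c1: "continuous_on (frontier \<Omega>) (\<lambda>y. wl y s)"
    by (rule continuous_on_eq[OF continuous_on_const[of _ "phl s"]]) (auto simp: wl_def)
  show "(\<lambda>y. J (x - y) * ext_u \<Omega> \<eta> s0 wl y s powr p) integrable_on (- \<Omega>)"
    by (rule int_cOm[where u=wl and s=s, OF x c1]) (use phl_bnd[OF s] in \<open>auto simp: wl_def\<close>)
next
  fix x assume x: "x \<in> closure \<Omega>"
  have hw: "hh wl x s = B x * phl s powr p" if s: "s \<in> {0..T}" for s
  proof -
    have "Ku wl x s = integral \<Omega> (\<lambda>y. 0)" unfolding Ku_def
      by (rule Henstock_Kurzweil_Integration.integral_cong) (use Fr_Om in \<open>auto simp: wl_def\<close>)
    then have k: "Ku wl x s = 0" by simp
    have "Gu wl x s = integral (- \<Omega>) (\<lambda>y. J (x - y) * phl s powr p)" unfolding Gu_def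
    proof (rule Henstock_Kurzweil_Integration.integral_cong)
      fix y assume y: "y \<in> - \<Omega>"
      show "J (x - y) * ext_u \<Omega> \<eta> s0 wl y s powr p = J (x - y) * phl s powr p"
      proof (cases "J (x - y) = 0")
        case False
        obtain z' where z': "z' \<in> frontier \<Omega>" "\<forall>u t. ext_u \<Omega> \<eta> s0 u y t = u z' t"
          using ext_near[OF x _ False] y by auto
        then show ?thesis by (simp add: wl_def)
      qed simp
    qed
    also have "\<dots> = B x * phl s powr p"
      unfolding B_def by (rule Henstock_Kurzweil_Integration.integral_mult_left)
    finally show ?thesis using k by (simp add: hh_def)
  qed
  have cph: "continuous_on {0..T} phl"
    unfolding phl_def[abs_def] using cc_pos rr
    by (intro continuous_on_powr' continuous_intros) auto
  have cpp: "continuous_on {0..T} (\<lambda>s. phl s powr p)"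
    by (rule continuous_on_powr'[OF cph continuous_on_const]) (use phl_bnd p0 in auto)
  have "continuous_on {0..T} (\<lambda>s. exp (A x * s) * (B x * phl s powr p))"
    by (intro continuous_intros cpp)
  then have "continuous_on {0..T} (\<lambda>s. exp (A x * s) * hh wl x s)"
    by (rule continuous_on_eq) (simp add: hw)
  then show "(\<lambda>s. exp (A x * s) * hh wl x s) integrable_on {0..T}"
    by (rule integrable_continuous_real)
qed

lemma Phi_ucont: assumes a: "adm u" shows "ucont (Phi u)"
proof -
  have b: "0 \<le> Phi u y s \<and> Phi u y s \<le> 1" if "y \<in> closure \<Omega>" "s \<in> {0..T}" for y s
  proof -
    have "0 \<le> Phi u y s \<and> Phi u y s \<le> 1/2" using Phi_bnd[OF a that] by blast
    then show ?thesis by linarith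
  qed
  show ?thesis unfolding ucont_def using Phi_cont[OF a] b by blast
qed

definition "Us n = ((\<lambda>f. Phi f) ^^ n) wl"

lemma Us_0: "Us 0 = wl" by (simp add: Us_def)
lemma Us_Suc: "Us (Suc n) = Phi (Us n)" by (simp add: Us_def)

lemma Us_adm: "adm (Us n)"
proof (induction n)
  case 0 then show ?case using wl_adm by (simp add: Us_0)
next
  case (Suc n) then show ?case using ucont_adm Phi_ucont by (simp add: Us_Suc)
qed

lemma Us_low: "z \<in> frontier \<Omega> \<Longrightarrow> s \<in> {0..T} \<Longrightarrow> phl s \<le> Us n z s"
proof (induction n arbitrary: z s)
  case 0 then show ?case by (simp add: Us_0 wl_def)
next
  case (Suc n) then show ?case unfolding Us_Suc by (intro Phi_lower[OF Us_adm]) auto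
qed

lemma Us_mono: "y \<in> closure \<Omega> \<Longrightarrow> s \<in> {0..T} \<Longrightarrow> Us n y s \<le> Us (Suc n) y s"
proof (induction n arbitrary: y s)
  case 0
  show ?case
  proof (cases "y \<in> frontier \<Omega>")
    case True then show ?thesis using Us_low[OF True 0(2), of 1] by (simp add: Us_0 wl_def)
  next
    case False then show ?thesis using Phi_bnd[OF wl_adm 0(1) 0(2)] by (simp add: Us_0 Us_Suc wl_def)
  qed
next
  case (Suc n)
  have f: "Phi (Us n) y s \<le> Phi (Us (Suc n)) y s" by (rule Phi_mono[OF Us_adm Us_adm Suc.IH Suc(2) Suc(3)])
  have e1: "Us (Suc n) y s = Phi (Us n) y s" by (simp only: Us_Suc)
  have e2: "Us (Suc (Suc n)) y s = Phi (Us (Suc n)) y s" by (simp only: Us_Suc[of "Suc n"])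
  show ?case using f e1 e2 by linarith
qed

lemma Us_bnd: "y \<in> closure \<Omega> \<Longrightarrow> s \<in> {0..T} \<Longrightarrow> 0 \<le> Us n y s \<and> Us n y s \<le> 1"
  using adm_D1[OF Us_adm] by blast

definition "ul x t = (SUP n. Us n x t)"

lemma Us_lim: assumes "y \<in> closure \<Omega>" "s \<in> {0..T}" shows "(\<lambda>n. Us n y s) \<longlonglongrightarrow> ul y s"
  unfolding ul_def
proof (rule LIMSEQ_incseq_SUP)
  show "bdd_above (range (\<lambda>n. Us n y s))" by (rule bdd_aboveI[where M=1]) (use Us_bnd[OF assms] in auto)
  show "incseq (\<lambda>n. Us n y s)" using Us_mono[OF assms] by (simp add: incseq_SucI)
qed

lemma ul_bnd: assumes "y \<in> closure \<Omega>" "s \<in> {0..T}" shows "Us n y s \<le> ul y s" "0 \<le> ul y s" "ul y s \<le> 1"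
proof -
  have inc: "incseq (\<lambda>n. Us n y s)" using Us_mono[OF assms] by (simp add: incseq_SucI)
  show "Us n y s \<le> ul y s" using incseq_le[OF inc Us_lim[OF assms]] by blast
  then show "0 \<le> ul y s" using Us_bnd[OF assms] order_trans by blast
  show "ul y s \<le> 1" using Us_lim[OF assms] Us_bnd[OF assms]
    by (intro LIMSEQ_le_const2[of "\<lambda>n. Us n y s"]) auto
qed

end


context P53 begin

lemma Ku_lim: assumes x: "x \<in> closure \<Omega>" and s: "s \<in> {0..T}"
  shows "(\<lambda>y. J (x - y) * ul y s) integrable_on \<Omega> \<and> (\<lambda>k. Ku (Us k) x s) \<longlonglongrightarrow> Ku ul x s"
proof -
  have "(\<lambda>y. J (x - y) * ul y s) integrable_on \<Omega> \<and>
     (\<lambda>k. integral \<Omega> (\<lambda>y. J (x - y) * Us k y s)) \<longlonglongrightarrow> integral \<Omega> (\<lambda>y. J (x - y) * ul y s)"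
  proof (rule monotone_convergence_increasing)
    show "(\<lambda>y. J (x - y) * Us k y s) integrable_on \<Omega>" for k by (rule adm_D2[OF Us_adm x s])
    show "J (x - y) * Us k y s \<le> J (x - y) * Us (Suc k) y s" if "y \<in> \<Omega>" for k y
      using Us_mono[of y s k] that Om_K s J_nonneg[of "x - y"] by (intro mult_left_mono) auto
    show "(\<lambda>k. J (x - y) * Us k y s) \<longlonglongrightarrow> J (x - y) * ul y s" if "y \<in> \<Omega>" for y
      using Us_lim[of y s] that Om_K s by (intro tendsto_mult_left) auto
    have "\<bar>integral \<Omega> (\<lambda>y. J (x - y) * Us k y s)\<bar> \<le> L" for k
      using Ku_bnd[OF Us_adm x s, of k] by (simp add: Ku_def)
    then show "bounded (range (\<lambda>k. integral \<Omega> (\<lambda>y. J (x - y) * Us k y s)))"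
      unfolding bounded_iff by (intro exI[of _ L]) auto
  qed
  then show ?thesis by (simp add: Ku_def)
qed

lemma Gu_lim: assumes x: "x \<in> closure \<Omega>" and s: "s \<in> {0..T}"
  shows "(\<lambda>y. J (x - y) * ext_u \<Omega> \<eta> s0 ul y s powr p) integrable_on (- \<Omega>) \<and> (\<lambda>k. Gu (Us k) x s) \<longlonglongrightarrow> Gu ul x s"
proof -
  have "(\<lambda>y. J (x - y) * ext_u \<Omega> \<eta> s0 ul y s powr p) integrable_on (- \<Omega>) \<and>
     (\<lambda>k. integral (- \<Omega>) (\<lambda>y. J (x - y) * ext_u \<Omega> \<eta> s0 (Us k) y s powr p)) \<longlonglongrightarrow>
       integral (- \<Omega>) (\<lambda>y. J (x - y) * ext_u \<Omega> \<eta> s0 ul y s powr p)"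
  proof (rule monotone_convergence_increasing)
    show "(\<lambda>y. J (x - y) * ext_u \<Omega> \<eta> s0 (Us k) y s powr p) integrable_on (- \<Omega>)" for k
      by (rule adm_D3[OF Us_adm x s])
    show "J (x - y) * ext_u \<Omega> \<eta> s0 (Us k) y s powr p \<le> J (x - y) * ext_u \<Omega> \<eta> s0 (Us (Suc k)) y s powr p" for k y
    proof -
      have e: "ext_u \<Omega> \<eta> s0 (Us k) y s \<le> ext_u \<Omega> \<eta> s0 (Us (Suc k)) y s"
        by (rule ext_mono) (use Us_mono s Fr_K in auto)
      have "0 \<le> ext_u \<Omega> \<eta> s0 (Us k) y s" using ext_bnd[where u="Us k" and s=s] adm_Fr[OF Us_adm s] by blast
      then have "ext_u \<Omega> \<eta> s0 (Us k) y s powr p \<le> ext_u \<Omega> \<eta> s0 (Us (Suc k)) y s powr p"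
        using e p0 by (intro powr_mono2) auto
      then show ?thesis using J_nonneg[of "x - y"] by (intro mult_left_mono) auto
    qed
    show "(\<lambda>k. J (x - y) * ext_u \<Omega> \<eta> s0 (Us k) y s powr p) \<longlonglongrightarrow> J (x - y) * ext_u \<Omega> \<eta> s0 ul y s powr p" for y
    proof (rule tendsto_mult_left)
      show "(\<lambda>k. ext_u \<Omega> \<eta> s0 (Us k) y s powr p) \<longlonglongrightarrow> ext_u \<Omega> \<eta> s0 ul y s powr p"
      proof (cases "\<exists>z\<in>frontier \<Omega>. \<forall>u t. ext_u \<Omega> \<eta> s0 u y t = u z t")
        case True
        then obtain z where z: "z \<in> frontier \<Omega>" "\<forall>u t. ext_u \<Omega> \<eta> s0 u y t = u z t" by blast
        have l: "(\<lambda>k. Us k z s) \<longlonglongrightarrow> ul z s" using Us_lim[of z s] z(1) Fr_K s by auto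
        have "(\<lambda>k. Us k z s powr p) \<longlonglongrightarrow> ul z s powr p"
        proof (rule tendsto_powr'[OF l tendsto_const])
          show "ul z s \<noteq> 0 \<or> (0 < p \<and> eventually (\<lambda>k. 0 \<le> Us k z s) sequentially)"
            using p0 Us_bnd[of z s] z(1) Fr_K s by auto
        qed
        then show ?thesis using z(2) by simp
      next
        case False
        then have "\<forall>u t. ext_u \<Omega> \<eta> s0 u y t = 0" using ext_cases[of y] by blast
        then show ?thesis by simp
      qed
    qed
    have "\<bar>integral (- \<Omega>) (\<lambda>y. J (x - y) * ext_u \<Omega> \<eta> s0 (Us k) y s powr p)\<bar> \<le> L" for k
      using Gu_bnd[OF Us_adm x s, of k] by (simp add: Gu_def)
    then show "bounded (range (\<lambda>k. integral (- \<Omega>) (\<lambda>y. J (x - y) * ext_u \<Omega> \<eta> s0 (Us k) y s powr p)))"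
      unfolding bounded_iff by (intro exI[of _ L]) auto
  qed
  then show ?thesis by (simp add: Gu_def)
qed

lemma hh_lim: assumes x: "x \<in> closure \<Omega>" and s: "s \<in> {0..T}"
  shows "(\<lambda>k. hh (Us k) x s) \<longlonglongrightarrow> hh ul x s"
  unfolding hh_def using Ku_lim[OF x s] Gu_lim[OF x s] by (intro tendsto_add) auto

lemma Ip_lim: assumes x: "x \<in> closure \<Omega>" and t: "t \<in> {0..T}"
  shows "(\<lambda>s. exp (A x * s) * hh ul x s) integrable_on {0..t} \<and> (\<lambda>k. Ip (Us k) x t) \<longlonglongrightarrow> Ip ul x t"
proof -
  have "(\<lambda>s. exp (A x * s) * hh ul x s) integrable_on {0..t} \<and>
    (\<lambda>k. integral {0..t} (\<lambda>s. exp (A x * s) * hh (Us k) x s)) \<longlonglongrightarrow> integral {0..t} (\<lambda>s. exp (A x * s) * hh ul x s)"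
  proof (rule monotone_convergence_increasing)
    show "(\<lambda>s. exp (A x * s) * hh (Us k) x s) integrable_on {0..t}" for k
      by (rule int_sub[OF Us_adm x t]) (use t in auto)
    show "exp (A x * s) * hh (Us k) x s \<le> exp (A x * s) * hh (Us (Suc k)) x s" if "s \<in> {0..t}" for k s
    proof -
      have sT: "s \<in> {0..T}" using that t by auto
      show ?thesis using hh_mono[OF Us_adm Us_adm Us_mono x sT] by simp
    qed
    show "(\<lambda>k. exp (A x * s) * hh (Us k) x s) \<longlonglongrightarrow> exp (A x * s) * hh ul x s" if "s \<in> {0..t}" for s
    proof -
      have sT: "s \<in> {0..T}" using that t by auto
      show ?thesis by (intro tendsto_mult_left hh_lim[OF x sT])
    qed
    have "\<bar>integral {0..t} (\<lambda>s. exp (A x * s) * hh (Us k) x s)\<bar> \<le> exp (A x * t) * (2 * L) * t" for k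
      using Ip_bnd[OF Us_adm x t, of k] by (simp add: Ip_def)
    then show "bounded (range (\<lambda>k. integral {0..t} (\<lambda>s. exp (A x * s) * hh (Us k) x s)))"
      unfolding bounded_iff by (intro exI[of _ "exp (A x * t) * (2 * L) * t"]) auto
  qed
  then show ?thesis by (simp add: Ip_def)
qed

lemma ul_fix: assumes x: "x \<in> closure \<Omega>" and t: "t \<in> {0..T}" shows "ul x t = Phi ul x t"
proof -
  have "(\<lambda>k. Phi (Us k) x t) \<longlonglongrightarrow> Phi ul x t"
    unfolding Phi_def using Ip_lim[OF x t] by (intro tendsto_mult_left) auto
  moreover have "(\<lambda>k. Phi (Us k) x t) \<longlonglongrightarrow> ul x t"
    using LIMSEQ_Suc[OF Us_lim[OF x t]] by (simp add: Us_Suc)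
  ultimately show ?thesis using LIMSEQ_unique by blast
qed

lemma ul_adm: "adm ul"
  unfolding adm_def
proof (intro conjI ballI)
  fix y s assume "y \<in> closure \<Omega>" "s \<in> {0..T}"
  then show "0 \<le> ul y s" "ul y s \<le> 1" using ul_bnd by auto
next
  fix x s assume "x \<in> closure \<Omega>" "s \<in> {0..T}"
  then show "(\<lambda>y. J (x - y) * ul y s) integrable_on \<Omega>"
    "(\<lambda>y. J (x - y) * ext_u \<Omega> \<eta> s0 ul y s powr p) integrable_on - \<Omega>"
    using Ku_lim Gu_lim by auto
next
  fix x assume "x \<in> closure \<Omega>"
  then show "(\<lambda>s. exp (A x * s) * hh ul x s) integrable_on {0..T}"
    using Ip_lim[of x T] T_pos by auto
qed

lemma ul_ucont: "ucont ul"
  unfolding ucont_def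
proof (intro conjI ballI)
  show "continuous_on (closure \<Omega> \<times> {0..T}) (\<lambda>q. ul (fst q) (snd q))"
    by (rule continuous_on_eq[OF Phi_cont[OF ul_adm]]) (auto simp: ul_fix)
  fix y s assume "y \<in> closure \<Omega>" "s \<in> {0..T}"
  then show "0 \<le> ul y s" "ul y s \<le> 1" using ul_bnd by auto
qed

end


context P53 begin

lemma main: "\<exists>t0 > 0. \<exists>u. is_solution_P \<Omega> J \<eta> s0 p (\<lambda>x. 0) t0 u
           \<and> (\<exists>x\<in>closure \<Omega>. \<exists>t\<in>{0..<t0}. u x t \<noteq> 0)"
proof (intro exI conjI)
  show "T > 0" by (rule T_pos)
  show "is_solution_P \<Omega> J \<eta> s0 p (\<lambda>x. 0) T ul"
    unfolding is_solution_P_def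
  proof (intro conjI ballI)
    fix x t assume x: "x \<in> closure \<Omega>" and t: "t \<in> {0..<T}"
    then show "0 \<le> ul x t" using ul_bnd[of x t] by auto
  next
    have c: "continuous_on (closure \<Omega> \<times> {0..T}) (\<lambda>q. ul (fst q) (snd q))" using ul_ucont by (simp add: ucont_def)
    have "continuous_on (closure \<Omega> \<times> {0..<T}) (\<lambda>q. ul (fst q) (snd q))"
      by (rule continuous_on_subset[OF c]) auto
    then show "continuous_on (closure \<Omega> \<times> {0..<T}) (\<lambda>(x, t). ul x t)" by (simp add: case_prod_beta)
  next
    fix x assume x: "x \<in> closure \<Omega>"
    have z: "0 \<in> {0..T}" using T_pos by simp
    show "ul x 0 = 0" using ul_fix[OF x z] Phi_bnd[OF ul_adm x z] by simp
  next
    fix x t assume x: "x \<in> closure \<Omega>" and t: "t \<in> {0..<T}"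
    have tT: "t \<in> {0..T}" using t by auto
    have D: "(Phi ul x has_real_derivative (- (A x * Phi ul x t) + hh ul x t)) (at t within {0..T})"
      by (rule Phi_deriv[OF ul_ucont x tT])
    have D2: "(ul x has_real_derivative (- (A x * Phi ul x t) + hh ul x t)) (at t within {0..T})"
      by (rule has_field_derivative_transform_within[OF D zero_less_one tT]) (use ul_fix[OF x] in auto)
    have D3: "(ul x has_real_derivative (- (A x * Phi ul x t) + hh ul x t)) (at t within {0..<T})"
      by (rule has_field_derivative_subset[OF D2]) auto
    have i1: "(\<lambda>y. J (x - y) * ul y t) integrable_on \<Omega>" by (rule adm_D2[OF ul_adm x tT])
    have i2: "(\<lambda>y. J (x - y) * ul x t) integrable_on \<Omega>" by (rule integrable_on_mult_left[OF int_J[OF Om_leb x]])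
    have "integral \<Omega> (\<lambda>y. J (x - y) * (ul y t - ul x t)) = integral \<Omega> (\<lambda>y. J (x - y) * ul y t - J (x - y) * ul x t)"
      by (simp add: right_diff_distrib)
    also have "\<dots> = Ku ul x t - integral \<Omega> (\<lambda>y. J (x - y) * ul x t)"
      unfolding Ku_def by (rule integral_diff[OF i1 i2])
    also have "integral \<Omega> (\<lambda>y. J (x - y) * ul x t) = A x * ul x t"
      unfolding A_def by (rule Henstock_Kurzweil_Integration.integral_mult_left)
    finally have e1: "integral \<Omega> (\<lambda>y. J (x - y) * (ul y t - ul x t)) = Ku ul x t - A x * ul x t" .
    have "- (A x * Phi ul x t) + hh ul x t =
        integral \<Omega> (\<lambda>y. J (x - y) * (ul y t - ul x t))
        + integral (- \<Omega>) (\<lambda>y. J (x - y) * ext_u \<Omega> \<eta> s0 ul y t powr p)"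
      unfolding e1 using ul_fix[OF x tT] by (simp add: hh_def Gu_def)
    then show "(ul x has_real_derivative
        integral \<Omega> (\<lambda>y. J (x - y) * (ul y t - ul x t))
        + integral (- \<Omega>) (\<lambda>y. J (x - y) * ext_u \<Omega> \<eta> s0 ul y t powr p)) (at t within {0..<T})"
      using D3 by simp
  qed
  obtain z where z: "z \<in> frontier \<Omega>" using Fr_ne by blast
  have zK: "z \<in> closure \<Omega>" using z Fr_K by blast
  have tT: "T / 2 \<in> {0..T}" "T / 2 \<in> {0..<T}" using T_pos by auto
  have "0 < phl (T / 2)" using T_pos by (intro phl_pos) simp
  also have "\<dots> \<le> Us 0 z (T / 2)" by (rule Us_low[OF z tT(1)])
  also have "\<dots> \<le> ul z (T / 2)" by (rule ul_bnd(1)[OF zK tT(1)])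
  finally have "ul z (T / 2) \<noteq> 0" by simp
  then show "\<exists>x\<in>closure \<Omega>. \<exists>t\<in>{0..<T}. ul x t \<noteq> 0" using zK tT(2) by blast
qed

end

theorem proposition5p3:
  fixes \<Omega> :: "'a::euclidean_space set" and J :: "'a \<Rightarrow> real" and \<eta> :: "'a \<Rightarrow> 'a"
    and d s0 p :: real
  assumes "kernel_ok J d" and "domain_ok \<Omega> \<eta> s0 d"
    and "0 < p" and "p < 1"
  shows "\<exists>t0 > 0. \<exists>u. is_solution_P \<Omega> J \<eta> s0 p (\<lambda>x. 0) t0 u
           \<and> (\<exists>x\<in>closure \<Omega>. \<exists>t\<in>{0..<t0}. u x t \<noteq> 0)"
  by (rule P53.main[OF P53.intro[OF assms]])



end
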